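(* Let $\mathcal{T}=[A,B]$, let $\nu$ be a measure on the Borel sets of $[A,B]$ with positive density, and consider the regression model $y(t)=\theta^Tf(t)+\epsilon(t)$, $\theta\in\mathbb{R}^m$ unknown, with $y$ observed on $[A,B]$ and zero-mean errors with covariance kernel $K$. Let $\phi_1,\phi_2,\dots$ be the eigenfunctions, orthonormal in $L_2(\nu,[A,B])$, with positive eigenvalues $\lambda_1,\lambda_2,\dots$, of the integral operator $T_K(h)(\cdot)=\int_A^BK(t,\cdot)h(t)\nu(dt)$ on $L_2(\nu,[A,B])$. Suppose $f(t)=\sum_{\ell=1}^\infty q_\ell\phi_\ell(t)$ for some sequence $(q_\ell)_{\ell\in\mathbb{N}}$ in $\mathbb{R}^m$ such that $f_1,\dots,f_m$ are linearly independent. Then the estimator $\hat\theta_G=\int_{\mathcal{T}}y(t)G(dt)$ with $G(dt)=C^{-1}\sum_{\ell=1}^\infty\lambda_\ell^{-1}q_\ell\phi_\ell(t)\nu(dt)$ and $C=\sum_{\ell=1}^\infty\lambda_\ell^{-1}q_\ell q_\ell^T$ is a BLUE with covariance matrix $C^{-1}$.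
   Context: A BLUE is an unbiased estimator of the form $\int_{\mathcal{T}}y(t)H(dt)$ ($H$ a signed $\mathbb{R}^m$-valued measure) with minimal covariance matrix $\int\int K(t,s)H(dt)H^T(ds)$ in Loewner order among such unbiased estimators. *)

theory Defs
  imports "HOL-Analysis.Analysis"
begin

text \<open>A finite signed Borel measure on [A,B], represented by a pair (P, N)
  of finite Borel measures on [A,B] (the signed measure being P - N).\<close>
type_synonym smeasure = "real measure \<times> real measure"

definition fin_smeasure :: "real \<Rightarrow> real \<Rightarrow> smeasure \<Rightarrow> bool" where
  "fin_smeasure A B H \<longleftrightarrow>
     sets (fst H) = sets (restrict_space borel {A..B}) \<and>
     sets (snd H) = sets (restrict_space borel {A..B}) \<and>
     finite_measure (fst H) \<and> finite_measure (snd H)"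

definition sint :: "smeasure \<Rightarrow> (real \<Rightarrow> real) \<Rightarrow> real" where
  "sint H h = integral\<^sup>L (fst H) h - integral\<^sup>L (snd H) h"

definition sint2 :: "(real \<Rightarrow> real \<Rightarrow> real) \<Rightarrow> smeasure \<Rightarrow> smeasure \<Rightarrow> real" where
  "sint2 K H1 H2 = sint H2 (\<lambda>s. sint H1 (\<lambda>t. K t s))"

text \<open>An R^m-valued signed measure H is a family of signed measures indexed by 'm.
  Unbiasedness of the estimator int y(t) H(dt) in the model y(t) = theta^T f(t) + eps(t).\<close>
definition unbiased ::
  "real \<Rightarrow> real \<Rightarrow> (real \<Rightarrow> real^'m) \<Rightarrow> ('m \<Rightarrow> smeasure) \<Rightarrow> bool" where
  "unbiased A B f H \<longleftrightarrow> (\<forall>i. fin_smeasure A B (H i)) \<and>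
     (\<forall>\<theta>::real^'m. (\<chi> i. sint (H i) (\<lambda>t. \<theta> \<bullet> f t)) = \<theta>)"

definition covm :: "(real \<Rightarrow> real \<Rightarrow> real) \<Rightarrow> ('m \<Rightarrow> smeasure) \<Rightarrow> real^'m^'m" where
  "covm K H = (\<chi> i j. sint2 K (H i) (H j))"

definition loewner_le :: "real^'m^'m \<Rightarrow> real^'m^'m \<Rightarrow> bool" where
  "loewner_le M N \<longleftrightarrow> (\<forall>v. v \<bullet> ((N - M) *v v) \<ge> 0)"

definition BLUE ::
  "real \<Rightarrow> real \<Rightarrow> (real \<Rightarrow> real^'m) \<Rightarrow> (real \<Rightarrow> real \<Rightarrow> real) \<Rightarrow> ('m \<Rightarrow> smeasure) \<Rightarrow> bool" where
  "BLUE A B f K H \<longleftrightarrow> unbiased A B f H \<and>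
     (\<forall>H'. unbiased A B f H' \<longrightarrow> loewner_le (covm K H) (covm K H'))"

definition cov_kernel :: "real \<Rightarrow> real \<Rightarrow> (real \<Rightarrow> real \<Rightarrow> real) \<Rightarrow> bool" where
  "cov_kernel A B K \<longleftrightarrow> (\<forall>s\<in>{A..B}. \<forall>t\<in>{A..B}. K s t = K t s) \<and>
     (\<forall>n (x::nat \<Rightarrow> real) (c::nat \<Rightarrow> real). (\<forall>i<n. x i \<in> {A..B}) \<longrightarrow>
        (\<Sum>i<n. \<Sum>j<n. c i * c j * K (x i) (x j)) \<ge> 0)"

definition dens_smeasure :: "real measure \<Rightarrow> (real \<Rightarrow> real) \<Rightarrow> smeasure" where
  "dens_smeasure \<nu> h = (density \<nu> (\<lambda>t. ennreal (max 0 (h t))),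
                          density \<nu> (\<lambda>t. ennreal (max 0 (- h t))))"

definition outer :: "real^'m \<Rightarrow> real^'m \<Rightarrow> real^'m^'m" where
  "outer u v = (\<chi> i j. u $ i * v $ j)"

end

theory Submission
  imports Defs
begin



lemma fm_bound:
  fixes u :: "real \<Rightarrow> real"
  assumes "finite_measure M" "u \<in> borel_measurable M" "\<And>t. t \<in> space M \<Longrightarrow> \<bar>u t\<bar> \<le> c"
  shows "integrable M u" "\<bar>integral\<^sup>L M u\<bar> \<le> c * measure M (space M)"
proof -
  interpret finite_measure M by fact
  show i: "integrable M u"
    by (rule integrable_const_bound[where B=c]) (use assms in auto)
  have "\<bar>integral\<^sup>L M u\<bar> \<le> integral\<^sup>L M (\<lambda>_. c)"
    by (rule integral_abs_bound_integral) (use i assms in auto)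
  then show "\<bar>integral\<^sup>L M u\<bar> \<le> c * measure M (space M)" by (simp add: mult.commute)
qed

lemma fin_sm_space:
  assumes "fin_smeasure A B H"
  shows "space (fst H) = {A..B}" "space (snd H) = {A..B}"
    "finite_measure (fst H)" "finite_measure (snd H)"
    "\<And>u. u \<in> borel_measurable (restrict_space borel {A..B}) \<Longrightarrow> u \<in> borel_measurable (fst H)"
    "\<And>u. u \<in> borel_measurable (restrict_space borel {A..B}) \<Longrightarrow> u \<in> borel_measurable (snd H)"
proof -
  have a: "sets (fst H) = sets (restrict_space borel {A..B})" "sets (snd H) = sets (restrict_space borel {A..B})"
    "finite_measure (fst H)" "finite_measure (snd H)"
    using assms unfolding fin_smeasure_def by auto
  have b: "space (fst H) = {A..B}" "space (snd H) = {A..B}"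
    using sets_eq_imp_space_eq[OF a(1)] sets_eq_imp_space_eq[OF a(2)] by auto
  show "space (fst H) = {A..B}" "space (snd H) = {A..B}"
    "finite_measure (fst H)" "finite_measure (snd H)" using a b by auto
  show "\<And>u. u \<in> borel_measurable (restrict_space borel {A..B}) \<Longrightarrow> u \<in> borel_measurable (fst H)"
    "\<And>u. u \<in> borel_measurable (restrict_space borel {A..B}) \<Longrightarrow> u \<in> borel_measurable (snd H)"
    using measurable_cong_sets[OF a(1) refl] measurable_cong_sets[OF a(2) refl] by auto
qed

definition tot :: "real \<Rightarrow> real \<Rightarrow> smeasure \<Rightarrow> real" where
  "tot A B H = measure (fst H) {A..B} + measure (snd H) {A..B}"

lemma sint_bound:
  assumes H: "fin_smeasure A B H" and u: "u \<in> borel_measurable (restrict_space borel {A..B})"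
    and b: "\<And>t. t \<in> {A..B} \<Longrightarrow> \<bar>u t\<bar> \<le> c"
  shows "\<bar>sint H u\<bar> \<le> c * tot A B H"
proof -
  note s = fin_sm_space[OF H]
  have 1: "\<bar>integral\<^sup>L (fst H) u\<bar> \<le> c * measure (fst H) {A..B}"
    using fm_bound(2)[OF s(3) s(5)[OF u]] b s(1) by auto
  have 2: "\<bar>integral\<^sup>L (snd H) u\<bar> \<le> c * measure (snd H) {A..B}"
    using fm_bound(2)[OF s(4) s(6)[OF u]] b s(2) by auto
  show ?thesis using 1 2 unfolding sint_def tot_def by (simp add: algebra_simps)
qed

lemma sint_integrable:
  fixes u :: "real \<Rightarrow> real"
  assumes H: "fin_smeasure A B H" and u: "u \<in> borel_measurable (restrict_space borel {A..B})"
    and b: "\<And>t. t \<in> {A..B} \<Longrightarrow> \<bar>u t\<bar> \<le> c"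
  shows "integrable (fst H) u" "integrable (snd H) u"
proof -
  note s = fin_sm_space[OF H]
  show "integrable (fst H) u" by (rule fm_bound(1)[OF s(3) s(5)[OF u]]) (use b s in auto)
  show "integrable (snd H) u" by (rule fm_bound(1)[OF s(4) s(6)[OF u]]) (use b s in auto)
qed

lemma sint_diff:
  assumes "integrable (fst H) u" "integrable (snd H) u" "integrable (fst H) v" "integrable (snd H) v"
  shows "sint H (\<lambda>t. u t - v t) = sint H u - sint H v"
  using assms unfolding sint_def by simp

lemma sint_cong:
  assumes H: "fin_smeasure A B H" and "\<And>t. t \<in> {A..B} \<Longrightarrow> u t = v t"
  shows "sint H u = sint H v"
  unfolding sint_def using fin_sm_space[OF H] assms
  by (metis Bochner_Integration.integral_cong)




lemma K_bounded:
  fixes A B :: real and K :: "real \<Rightarrow> real \<Rightarrow> real"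
  assumes "continuous_on ({A..B} \<times> {A..B}) (\<lambda>(t, s). K t s)"
  obtains Mk where "Mk > 0" "\<And>t s. t \<in> {A..B} \<Longrightarrow> s \<in> {A..B} \<Longrightarrow> \<bar>K t s\<bar> \<le> Mk"
proof -
  have "compact ((\<lambda>(t, s). K t s) ` ({A..B} \<times> {A..B}))"
    by (rule compact_continuous_image[OF assms]) (simp add: compact_Times)
  then have "bounded ((\<lambda>(t, s). K t s) ` ({A..B} \<times> {A..B}))" by (rule compact_imp_bounded)
  then obtain b where "b > 0" "\<forall>x\<in>(\<lambda>(t, s). K t s) ` ({A..B} \<times> {A..B}). norm x \<le> b"
    unfolding bounded_pos by blast
  then show ?thesis using that[of b] by force
qed

lemma K_slice_cont:
  fixes A B :: real and K :: "real \<Rightarrow> real \<Rightarrow> real"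
  assumes "continuous_on ({A..B} \<times> {A..B}) (\<lambda>(t, s). K t s)" "s \<in> {A..B}"
  shows "continuous_on {A..B} (\<lambda>t. K t s)"
proof -
  have "continuous_on {A..B} ((\<lambda>(t, s). K t s) \<circ> (\<lambda>t. (t, s)))"
    by (rule continuous_on_compose) (use assms in \<open>auto intro!: continuous_intros continuous_on_subset[OF assms(1)]\<close>)
  then show ?thesis by (simp add: o_def)
qed

lemma K_slice_meas:
  fixes A B :: real and K :: "real \<Rightarrow> real \<Rightarrow> real"
  assumes "continuous_on ({A..B} \<times> {A..B}) (\<lambda>(t, s). K t s)" "s \<in> {A..B}"
  shows "(\<lambda>t. K t s) \<in> borel_measurable (restrict_space borel {A..B})"
  by (rule borel_measurable_continuous_on_restrict[OF K_slice_cont[OF assms]])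

lemma K_unif:
  fixes A B :: real and K :: "real \<Rightarrow> real \<Rightarrow> real"
  assumes "continuous_on ({A..B} \<times> {A..B}) (\<lambda>(t, s). K t s)" "e > 0"
  obtains d where "d > 0" "\<And>t s t' s'. t \<in> {A..B} \<Longrightarrow> s \<in> {A..B} \<Longrightarrow> t' \<in> {A..B} \<Longrightarrow> s' \<in> {A..B}
     \<Longrightarrow> \<bar>t - t'\<bar> < d \<Longrightarrow> \<bar>s - s'\<bar> < d \<Longrightarrow> \<bar>K t s - K t' s'\<bar> < e"
proof -
  have "uniformly_continuous_on ({A..B} \<times> {A..B}) (\<lambda>(t, s). K t s)"
    by (rule compact_uniformly_continuous[OF assms(1)]) (simp add: compact_Times)
  then obtain d where d: "d > 0" and
    h: "\<forall>x\<in>{A..B} \<times> {A..B}. \<forall>x'\<in>{A..B} \<times> {A..B}. dist x' x < d \<longrightarrow>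
        dist ((\<lambda>(t, s). K t s) x') ((\<lambda>(t, s). K t s) x) < e"
    unfolding uniformly_continuous_on_def using assms(2) by metis
  show ?thesis
  proof (rule that[of "d/2"])
    show "d/2 > 0" using d by simp
    fix t s t' s' assume *: "t \<in> {A..B}" "s \<in> {A..B}" "t' \<in> {A..B}" "s' \<in> {A..B}"
      "\<bar>t - t'\<bar> < d/2" "\<bar>s - s'\<bar> < d/2"
    have "dist (t, s) (t', s') \<le> dist t t' + dist s s'"
      unfolding dist_Pair_Pair using sqrt_sum_squares_le_sum_abs[of "dist t t'" "dist s s'"] by simp
    also have "\<dots> < d" using * by (simp add: dist_real_def)
    finally have "dist (t, s) (t', s') < d" .
    then show "\<bar>K t s - K t' s'\<bar> < e" using h * by (force simp: dist_real_def)
  qed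
qed




lemma grid:
  fixes A B d :: real
  assumes AB: "A < B" and d: "d > 0"
  obtains N :: nat and x :: "nat \<Rightarrow> real" and idx :: "real \<Rightarrow> nat"
  where "N > 0" "\<And>a. a < N \<Longrightarrow> x a \<in> {A..B}"
    "\<And>t. t \<in> {A..B} \<Longrightarrow> idx t < N" "\<And>t. t \<in> {A..B} \<Longrightarrow> \<bar>t - x (idx t)\<bar> < d"
    "idx \<in> measurable (restrict_space borel {A..B}) (count_space UNIV)"
proof -
  define N :: nat where "N = nat \<lceil>(B - A) / d\<rceil> + 1"
  have N0: "N > 0" unfolding N_def by simp
  have "(B - A) / d < real N" unfolding N_def by linarith
  then have hN: "(B - A) < real N * d" using d by (simp add: field_simps)
  define h where "h = (B - A) / N"
  have h0: "h > 0" unfolding h_def using AB N0 by simp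
  have hd: "h < d" unfolding h_def using hN N0 by (simp add: field_simps)
  have Nh: "A + real N * h = B" unfolding h_def using N0 by simp
  define x where "x a = A + real a * h" for a :: nat
  define idx where "idx t = min (N - 1) (nat \<lfloor>(t - A) / h\<rfloor>)" for t
  show ?thesis
  proof (rule that[of N x idx])
    show "N > 0" by (rule N0)
    fix a assume "a < N"
    then have "real a * h \<le> real N * h" using h0 by simp
    moreover have "0 \<le> real a * h" using h0 by simp
    ultimately show "x a \<in> {A..B}" unfolding x_def using Nh by simp
  next
    fix t assume t: "t \<in> {A..B}"
    show "idx t < N" unfolding idx_def using N0 by simp
    define k where "k = nat \<lfloor>(t - A) / h\<rfloor>"
    have q: "(t - A) / h \<ge> 0" using t h0 by simp
    have k1: "real k \<le> (t - A) / h" "(t - A) / h < real k + 1" unfolding k_def using q by linarith+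
    have k2: "x k \<le> t" "t < x k + h" using k1 h0 unfolding x_def by (simp_all add: field_simps)
    show "\<bar>t - x (idx t)\<bar> < d"
    proof (cases "k \<le> N - 1")
      case True
      then have "idx t = k" unfolding idx_def k_def by simp
      then show ?thesis using k2 hd by simp
    next
      case False
      then have kN: "k \<ge> N" by simp
      then have "x k \<ge> B" unfolding x_def using h0 Nh
        by (smt (verit, best) mult_right_mono of_nat_le_iff)
      then have tB: "t = B" using k2 t by simp
      have "idx t = N - 1" unfolding idx_def using False k_def by simp
      then have "x (idx t) = B - h" unfolding x_def using Nh N0 by (simp add: of_nat_diff algebra_simps)
      then show ?thesis using tB h0 hd by simp
    qed
  next
    have "idx \<in> measurable borel (count_space UNIV)" unfolding idx_def by measurable
    then show "idx \<in> measurable (restrict_space borel {A..B}) (count_space UNIV)"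
      by (rule measurable_restrict_space1)
  qed
qed

lemma step_integral:
  fixes \<phi> :: "nat \<Rightarrow> real"
  assumes fm: "finite_measure M" and idx: "idx \<in> measurable M (count_space UNIV)"
    and lt: "\<And>t. t \<in> space M \<Longrightarrow> idx t < N"
  shows "integrable M (\<lambda>t. \<phi> (idx t))"
    "integral\<^sup>L M (\<lambda>t. \<phi> (idx t)) = (\<Sum>a<N. \<phi> a * measure M {t\<in>space M. idx t = a})"
proof -
  interpret finite_measure M by fact
  have S: "{t\<in>space M. idx t = a} \<in> sets M" for a
  proof -
    have "idx -` {a} \<inter> space M \<in> sets M" using idx by (rule measurable_sets) simp
    then show ?thesis by (simp add: Int_def conj_commute vimage_def)
  qed
  have eq: "\<phi> (idx t) = (\<Sum>a<N. \<phi> a * indicator {t\<in>space M. idx t = a} t)" if t: "t \<in> space M" for t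
  proof -
    have "(\<Sum>a<N. \<phi> a * indicator {t\<in>space M. idx t = a} t) = (\<Sum>a\<in>{idx t}. \<phi> a * indicator {t\<in>space M. idx t = a} t)"
      by (rule sum.mono_neutral_right) (use t lt in \<open>auto simp: indicator_def\<close>)
    then show ?thesis using t by (simp add: indicator_def)
  qed
  have int: "integrable M (\<lambda>t. \<Sum>a<N. \<phi> a * indicator {t\<in>space M. idx t = a} t)"
  proof (rule Bochner_Integration.integrable_sum)
    fix a assume "a \<in> {..<N}"
    have "integrable M (indicator {t\<in>space M. idx t = a} :: _ \<Rightarrow> real)"
      by (rule integrable_real_indicator[OF S]) (simp add: emeasure_finite less_top[symmetric])
    then show "integrable M (\<lambda>t. \<phi> a * indicator {t\<in>space M. idx t = a} t)" by simp
  qed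
  show "integrable M (\<lambda>t. \<phi> (idx t))"
    by (rule Bochner_Integration.integrable_cong[THEN iffD2, OF refl _ int]) (simp add: eq)
  have "integral\<^sup>L M (\<lambda>t. \<phi> (idx t)) = integral\<^sup>L M (\<lambda>t. \<Sum>a<N. \<phi> a * indicator {t\<in>space M. idx t = a} t)"
    by (rule Bochner_Integration.integral_cong) (simp_all add: eq)
  also have "\<dots> = (\<Sum>a<N. \<phi> a * measure M {t\<in>space M. idx t = a})"
  proof -
    have ii: "integrable M (\<lambda>t. \<phi> a * indicator {t\<in>space M. idx t = a} t)" for a
    proof -
      have "integrable M (indicator {t\<in>space M. idx t = a} :: _ \<Rightarrow> real)"
        by (rule integrable_real_indicator[OF S]) (simp add: emeasure_finite less_top[symmetric])
      then show ?thesis by simp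
    qed
    have "integral\<^sup>L M (\<lambda>t. \<Sum>a<N. \<phi> a * indicator {t\<in>space M. idx t = a} t)
       = (\<Sum>a<N. integral\<^sup>L M (\<lambda>t. \<phi> a * indicator {t\<in>space M. idx t = a} t))"
      by (rule Bochner_Integration.integral_sum) (rule ii)
    also have "\<dots> = (\<Sum>a<N. \<phi> a * measure M {t\<in>space M. idx t = a})"
      by (rule sum.cong) (auto simp: Int_absorb2)
    finally show ?thesis .
  qed
  finally show "integral\<^sup>L M (\<lambda>t. \<phi> (idx t)) = (\<Sum>a<N. \<phi> a * measure M {t\<in>space M. idx t = a})" .
qed




definition wt :: "(real \<Rightarrow> nat) \<Rightarrow> real \<Rightarrow> real \<Rightarrow> smeasure \<Rightarrow> nat \<Rightarrow> real" where
  "wt idx A B H a = measure (fst H) {t\<in>{A..B}. idx t = a} - measure (snd H) {t\<in>{A..B}. idx t = a}"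

lemma step_meas:
  assumes idx: "idx \<in> measurable (restrict_space borel {A..B}) (count_space UNIV)"
  shows "(\<lambda>t. \<phi> (idx t) :: real) \<in> borel_measurable (restrict_space borel {A..B})"
  by (rule measurable_compose[OF idx borel_measurable_count_space])

lemma sint_step:
  fixes \<phi> :: "nat \<Rightarrow> real"
  assumes H: "fin_smeasure A B H"
    and idx: "idx \<in> measurable (restrict_space borel {A..B}) (count_space UNIV)"
    and lt: "\<And>t. t \<in> {A..B} \<Longrightarrow> idx t < N"
  shows "sint H (\<lambda>t. \<phi> (idx t)) = (\<Sum>a<N. \<phi> a * wt idx A B H a)"
    "integrable (fst H) (\<lambda>t. \<phi> (idx t))" "integrable (snd H) (\<lambda>t. \<phi> (idx t))"
proof -
  note s = fin_sm_space[OF H]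
  have i1: "idx \<in> measurable (fst H) (count_space UNIV)" "idx \<in> measurable (snd H) (count_space UNIV)"
    using H idx unfolding fin_smeasure_def by (auto simp: measurable_cong_sets)
  note a = step_integral[OF s(3) i1(1), of N \<phi>] step_integral[OF s(4) i1(2), of N \<phi>]
  show "integrable (fst H) (\<lambda>t. \<phi> (idx t))" "integrable (snd H) (\<lambda>t. \<phi> (idx t))"
    using a s lt by auto
  have "sint H (\<lambda>t. \<phi> (idx t)) = (\<Sum>a<N. \<phi> a * measure (fst H) {t\<in>{A..B}. idx t = a})
     - (\<Sum>a<N. \<phi> a * measure (snd H) {t\<in>{A..B}. idx t = a})"
    unfolding sint_def using a s lt by auto
  also have "\<dots> = (\<Sum>a<N. \<phi> a * wt idx A B H a)"
    unfolding wt_def by (simp add: sum_subtractf right_diff_distrib)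
  finally show "sint H (\<lambda>t. \<phi> (idx t)) = (\<Sum>a<N. \<phi> a * wt idx A B H a)" .
qed

lemma sint_cont:
  fixes K :: "real \<Rightarrow> real \<Rightarrow> real"
  assumes H: "fin_smeasure A B H" and Kc: "continuous_on ({A..B} \<times> {A..B}) (\<lambda>(t, s). K t s)"
  shows "continuous_on {A..B} (\<lambda>s. sint H (\<lambda>t. K t s))"
  unfolding continuous_on_iff
proof (intro ballI allI impI)
  fix s0 and e :: real assume s0: "s0 \<in> {A..B}" and e: "e > 0"
  define c where "c = e / (2 * (tot A B H + 1))"
  have tot0: "tot A B H \<ge> 0" unfolding tot_def by simp
  have c0: "c > 0" unfolding c_def using e tot0 by simp
  obtain d where d: "d > 0" and hd: "\<And>t s t' s'. t \<in> {A..B} \<Longrightarrow> s \<in> {A..B} \<Longrightarrow> t' \<in> {A..B} \<Longrightarrow> s' \<in> {A..B}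
     \<Longrightarrow> \<bar>t - t'\<bar> < d \<Longrightarrow> \<bar>s - s'\<bar> < d \<Longrightarrow> \<bar>K t s - K t' s'\<bar> < c"
    using K_unif[OF Kc c0] by blast
  show "\<exists>d>0. \<forall>s\<in>{A..B}. dist s s0 < d \<longrightarrow> dist (sint H (\<lambda>t. K t s)) (sint H (\<lambda>t. K t s0)) < e"
  proof (intro exI[of _ d] conjI ballI impI d)
    fix s assume s: "s \<in> {A..B}" and ds: "dist s s0 < d"
    obtain Mk where Mk: "\<And>t s. t \<in> {A..B} \<Longrightarrow> s \<in> {A..B} \<Longrightarrow> \<bar>K t s\<bar> \<le> Mk"
      using K_bounded[OF Kc] by metis
    have i1: "integrable (fst H) (\<lambda>t. K t s)" "integrable (snd H) (\<lambda>t. K t s)"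
      by (rule sint_integrable[OF H K_slice_meas[OF Kc s]], rule Mk, simp, rule s)+
    have i2: "integrable (fst H) (\<lambda>t. K t s0)" "integrable (snd H) (\<lambda>t. K t s0)"
      by (rule sint_integrable[OF H K_slice_meas[OF Kc s0]], rule Mk, simp, rule s0)+
    have "\<bar>sint H (\<lambda>t. K t s - K t s0)\<bar> \<le> c * tot A B H"
    proof (rule sint_bound[OF H])
      show "(\<lambda>t. K t s - K t s0) \<in> borel_measurable (restrict_space borel {A..B})"
        by (rule borel_measurable_diff[OF K_slice_meas[OF Kc s] K_slice_meas[OF Kc s0]])
      fix t assume t: "t \<in> {A..B}"
      show "\<bar>K t s - K t s0\<bar> \<le> c" using hd[OF t s t s0] d ds by (simp add: dist_real_def less_imp_le)
    qed
    also have "\<dots> < e"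
    proof -
      have "e * tot A B H \<ge> 0" using e tot0 by simp
      then show ?thesis unfolding c_def using e tot0 by (simp add: field_simps; linarith)
    qed
    finally show "dist (sint H (\<lambda>t. K t s)) (sint H (\<lambda>t. K t s0)) < e"
      using sint_diff[OF i1 i2] by (simp add: dist_real_def)
  qed
qed




lemma approx_sint2:
  fixes K :: "real \<Rightarrow> real \<Rightarrow> real" and x :: "nat \<Rightarrow> real"
  assumes H1: "fin_smeasure A B H1" and H2: "fin_smeasure A B H2"
    and Kc: "continuous_on ({A..B} \<times> {A..B}) (\<lambda>(t, s). K t s)"
    and idx: "idx \<in> measurable (restrict_space borel {A..B}) (count_space UNIV)"
    and lt: "\<And>t. t \<in> {A..B} \<Longrightarrow> idx t < N"
    and bnd: "\<And>t s. t \<in> {A..B} \<Longrightarrow> s \<in> {A..B} \<Longrightarrow> \<bar>K t s - K (x (idx t)) (x (idx s))\<bar> \<le> \<epsilon>"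
  shows "\<bar>sint2 K H1 H2 - (\<Sum>a<N. \<Sum>b<N. K (x a) (x b) * wt idx A B H1 a * wt idx A B H2 b)\<bar>
          \<le> \<epsilon> * tot A B H1 * tot A B H2"
proof -
  obtain Mk where Mk: "\<And>t s. t \<in> {A..B} \<Longrightarrow> s \<in> {A..B} \<Longrightarrow> \<bar>K t s\<bar> \<le> Mk"
    using K_bounded[OF Kc] by metis
  define F where "F s = sint H1 (\<lambda>t. K t s)" for s
  define \<psi> where "\<psi> b = (\<Sum>a<N. K (x a) (x b) * wt idx A B H1 a)" for b
  have stepF: "sint H1 (\<lambda>t. K (x (idx t)) (x (idx s))) = \<psi> (idx s)" for s
    unfolding \<psi>_def by (rule sint_step(1)[OF H1 idx lt])
  have diff1: "\<bar>F s - \<psi> (idx s)\<bar> \<le> \<epsilon> * tot A B H1" if s: "s \<in> {A..B}" for s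
  proof -
    have i1: "integrable (fst H1) (\<lambda>t. K t s)" "integrable (snd H1) (\<lambda>t. K t s)"
      by (rule sint_integrable[OF H1 K_slice_meas[OF Kc s]], rule Mk, simp, rule s)+
    note i2 = sint_step(2,3)[OF H1 idx lt, of "\<lambda>a. K (x a) (x (idx s))"]
    have "F s - \<psi> (idx s) = sint H1 (\<lambda>t. K t s - K (x (idx t)) (x (idx s)))"
      unfolding F_def stepF[symmetric] by (rule sint_diff[OF i1 i2, symmetric])
    also have "\<bar>\<dots>\<bar> \<le> \<epsilon> * tot A B H1"
    proof (rule sint_bound[OF H1])
      show "(\<lambda>t. K t s - K (x (idx t)) (x (idx s))) \<in> borel_measurable (restrict_space borel {A..B})"
        by (rule borel_measurable_diff[OF K_slice_meas[OF Kc s] step_meas[OF idx]])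
      fix t assume t: "t \<in> {A..B}" then show "\<bar>K t s - K (x (idx t)) (x (idx s))\<bar> \<le> \<epsilon>" using bnd s by simp
    qed
    finally show ?thesis .
  qed
  have Fmeas: "F \<in> borel_measurable (restrict_space borel {A..B})"
    unfolding F_def by (rule borel_measurable_continuous_on_restrict[OF sint_cont[OF H1 Kc]])
  have Fbnd: "\<bar>F s\<bar> \<le> Mk * tot A B H1" if s: "s \<in> {A..B}" for s
    unfolding F_def by (rule sint_bound[OF H1 K_slice_meas[OF Kc s]]) (rule Mk, simp, rule s)
  have iF: "integrable (fst H2) F" "integrable (snd H2) F"
    by (rule sint_integrable[OF H2 Fmeas], rule Fbnd, simp)+
  note iP = sint_step(2,3)[OF H2 idx lt, of \<psi>]
  have "sint2 K H1 H2 - sint H2 (\<lambda>s. \<psi> (idx s)) = sint H2 (\<lambda>s. F s - \<psi> (idx s))"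
    unfolding sint2_def F_def[symmetric] by (rule sint_diff[OF iF iP, symmetric])
  also have "\<bar>\<dots>\<bar> \<le> (\<epsilon> * tot A B H1) * tot A B H2"
    by (rule sint_bound[OF H2 borel_measurable_diff[OF Fmeas step_meas[OF idx]]]) (rule diff1)
  finally have *: "\<bar>sint2 K H1 H2 - sint H2 (\<lambda>s. \<psi> (idx s))\<bar> \<le> \<epsilon> * tot A B H1 * tot A B H2" .
  have "sint H2 (\<lambda>s. \<psi> (idx s)) = (\<Sum>b<N. \<psi> b * wt idx A B H2 b)"
    by (rule sint_step(1)[OF H2 idx lt])
  also have "\<dots> = (\<Sum>a<N. \<Sum>b<N. K (x a) (x b) * wt idx A B H1 a * wt idx A B H2 b)"
    unfolding \<psi>_def sum_distrib_right by (rule sum.swap)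
  finally show ?thesis using * by simp
qed

definition gridsum :: "(real \<Rightarrow> real \<Rightarrow> real) \<Rightarrow> nat \<Rightarrow> (nat \<Rightarrow> real) \<Rightarrow> (real \<Rightarrow> nat) \<Rightarrow> real \<Rightarrow> real
    \<Rightarrow> smeasure \<Rightarrow> smeasure \<Rightarrow> real" where
  "gridsum K N x idx A B H1 H2 = (\<Sum>a<N. \<Sum>b<N. K (x a) (x b) * wt idx A B H1 a * wt idx A B H2 b)"

lemma grid_approx:
  fixes K :: "real \<Rightarrow> real \<Rightarrow> real"
  assumes AB: "A < B" and Kc: "continuous_on ({A..B} \<times> {A..B}) (\<lambda>(t, s). K t s)" and e: "\<epsilon> > 0"
  obtains N x idx where "\<And>a. a < N \<Longrightarrow> x a \<in> {A..B}"
    "\<And>H1 H2. fin_smeasure A B H1 \<Longrightarrow> fin_smeasure A B H2 \<Longrightarrow>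
       \<bar>sint2 K H1 H2 - gridsum K N x idx A B H1 H2\<bar> \<le> \<epsilon> * tot A B H1 * tot A B H2"
proof -
  obtain d where d: "d > 0" and hd: "\<And>t s t' s'. t \<in> {A..B} \<Longrightarrow> s \<in> {A..B} \<Longrightarrow> t' \<in> {A..B} \<Longrightarrow> s' \<in> {A..B}
     \<Longrightarrow> \<bar>t - t'\<bar> < d \<Longrightarrow> \<bar>s - s'\<bar> < d \<Longrightarrow> \<bar>K t s - K t' s'\<bar> < \<epsilon>"
    using K_unif[OF Kc e] by metis
  show ?thesis
  proof (rule grid[OF AB d])
  fix N :: nat and x :: "nat \<Rightarrow> real" and idx :: "real \<Rightarrow> nat" assume g: "N > 0" "\<And>a. a < N \<Longrightarrow> x a \<in> {A..B}"
    "\<And>t. t \<in> {A..B} \<Longrightarrow> idx t < N" "\<And>t. t \<in> {A..B} \<Longrightarrow> \<bar>t - x (idx t)\<bar> < d"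
    "idx \<in> measurable (restrict_space borel {A..B}) (count_space UNIV)"
  show ?thesis
  proof (rule that[of N x idx])
    show "\<And>a. a < N \<Longrightarrow> x a \<in> {A..B}" by (rule g(2))
    fix H1 H2 assume H1: "fin_smeasure A B H1" and H2: "fin_smeasure A B H2"
    show "\<bar>sint2 K H1 H2 - gridsum K N x idx A B H1 H2\<bar> \<le> \<epsilon> * tot A B H1 * tot A B H2"
      unfolding gridsum_def
    proof (rule approx_sint2[OF H1 H2 Kc g(5) g(3)])
      fix t s assume t: "t \<in> {A..B}" and s: "s \<in> {A..B}"
      show "\<bar>K t s - K (x (idx t)) (x (idx s))\<bar> \<le> \<epsilon>"
        using hd[OF t s g(2)[OF g(3)[OF t]] g(2)[OF g(3)[OF s]] g(4)[OF t] g(4)[OF s]] by simp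
    qed
  qed
  qed
qed




lemma eps_nonneg:
  fixes X c :: real
  assumes c: "c \<ge> 0" and h: "\<And>\<epsilon>. \<epsilon> > 0 \<Longrightarrow> X \<ge> - (\<epsilon> * c)"
  shows "X \<ge> 0"
proof -
  have "0 \<le> X + e" if e: "e > 0" for e
  proof -
    have "X \<ge> - ((e / (c + 1)) * c)" using h[of "e / (c+1)"] e c by simp
    moreover have "(e / (c + 1)) * c \<le> e" using e c by (simp add: field_simps)
    ultimately show ?thesis by linarith
  qed
  then show ?thesis by (metis add.left_neutral field_le_epsilon)
qed

definition GS :: "(real \<Rightarrow> real \<Rightarrow> real) \<Rightarrow> nat \<Rightarrow> (nat \<Rightarrow> real) \<Rightarrow> (nat \<Rightarrow> real) \<Rightarrow> (nat \<Rightarrow> real) \<Rightarrow> real" where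
  "GS K N x w1 w2 = (\<Sum>a<N. \<Sum>b<N. K (x a) (x b) * w1 a * w2 b)"

lemma gridsum_GS: "gridsum K N x idx A B H1 H2 = GS K N x (wt idx A B H1) (wt idx A B H2)"
  unfolding gridsum_def GS_def ..

lemma GS_sym:
  assumes "\<And>a b. a < N \<Longrightarrow> b < N \<Longrightarrow> K (x a) (x b) = K (x b) (x a)"
  shows "GS K N x w1 w2 = GS K N x w2 w1"
proof -
  have "GS K N x w2 w1 = (\<Sum>b<N. \<Sum>a<N. K (x a) (x b) * w2 a * w1 b)"
    unfolding GS_def by (rule sum.swap)
  also have "\<dots> = GS K N x w1 w2"
    unfolding GS_def using assms by (intro sum.cong refl) (simp add: mult_ac)
  finally show ?thesis ..
qed

lemma GS_diff: "GS K N x (\<lambda>a. u a - u' a) (\<lambda>b. w b - w' b)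
    = GS K N x u w - GS K N x u w' - GS K N x u' w + GS K N x u' w'"
  unfolding GS_def by (simp add: algebra_simps sum_subtractf sum.distrib)

lemma GS_lin: "GS K N x (\<lambda>a. \<Sum>i\<in>I. v i * U i a) (\<lambda>b. \<Sum>j\<in>I. v j * U j b)
    = (\<Sum>i\<in>I. \<Sum>j\<in>I. v i * v j * GS K N x (U i) (U j))"
proof -
  have "GS K N x (\<lambda>a. \<Sum>i\<in>I. v i * U i a) (\<lambda>b. \<Sum>j\<in>I. v j * U j b)
     = (\<Sum>a<N. \<Sum>b<N. \<Sum>i\<in>I. \<Sum>j\<in>I. v i * v j * (K (x a) (x b) * U i a * U j b))"
    unfolding GS_def by (simp add: sum_distrib_left sum_distrib_right mult_ac)
  also have "\<dots> = (\<Sum>a<N. \<Sum>i\<in>I. \<Sum>b<N. \<Sum>j\<in>I. v i * v j * (K (x a) (x b) * U i a * U j b))"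
    by (intro sum.cong refl) (rule sum.swap)
  also have "\<dots> = (\<Sum>i\<in>I. \<Sum>a<N. \<Sum>b<N. \<Sum>j\<in>I. v i * v j * (K (x a) (x b) * U i a * U j b))"
    by (rule sum.swap)
  also have "\<dots> = (\<Sum>i\<in>I. \<Sum>a<N. \<Sum>j\<in>I. \<Sum>b<N. v i * v j * (K (x a) (x b) * U i a * U j b))"
    by (intro sum.cong refl) (rule sum.swap)
  also have "\<dots> = (\<Sum>i\<in>I. \<Sum>j\<in>I. \<Sum>a<N. \<Sum>b<N. v i * v j * (K (x a) (x b) * U i a * U j b))"
    by (intro sum.cong refl) (rule sum.swap)
  also have "\<dots> = (\<Sum>i\<in>I. \<Sum>j\<in>I. v i * v j * GS K N x (U i) (U j))"
    unfolding GS_def by (simp add: sum_distrib_left)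
  finally show ?thesis .
qed

lemma GS_psd:
  assumes K: "cov_kernel A B K" and x: "\<And>a. a < N \<Longrightarrow> x a \<in> {A..B}"
  shows "GS K N x w w \<ge> 0"
proof -
  have "(\<Sum>i<N. \<Sum>j<N. w i * w j * K (x i) (x j)) \<ge> 0"
    using K x unfolding cov_kernel_def by blast
  then show ?thesis unfolding GS_def by (simp add: mult_ac)
qed

lemma tot_nonneg: "tot A B H \<ge> 0" unfolding tot_def by simp

lemma sint2_swap:
  fixes K :: "real \<Rightarrow> real \<Rightarrow> real"
  assumes AB: "A < B" and Kc: "continuous_on ({A..B} \<times> {A..B}) (\<lambda>(t, s). K t s)"
    and Ks: "\<And>s t. s \<in> {A..B} \<Longrightarrow> t \<in> {A..B} \<Longrightarrow> K s t = K t s"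
    and H1: "fin_smeasure A B H1" and H2: "fin_smeasure A B H2"
  shows "sint2 K H1 H2 = sint2 K H2 H1"
proof -
  have bd: "\<bar>sint2 K H1 H2 - sint2 K H2 H1\<bar> \<le> \<epsilon> * (2 * tot A B H1 * tot A B H2)" if e: "\<epsilon> > 0" for \<epsilon>
  proof (rule grid_approx[OF AB Kc e])
    fix N x idx assume x: "\<And>a. a < N \<Longrightarrow> x a \<in> {A..B}"
      and ap: "\<And>H1 H2. fin_smeasure A B H1 \<Longrightarrow> fin_smeasure A B H2 \<Longrightarrow>
       \<bar>sint2 K H1 H2 - gridsum K N x idx A B H1 H2\<bar> \<le> \<epsilon> * tot A B H1 * tot A B H2"
    have "gridsum K N x idx A B H1 H2 = gridsum K N x idx A B H2 H1"
      unfolding gridsum_GS by (rule GS_sym) (use Ks x in auto)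
    then show ?thesis using ap[OF H1 H2] ap[OF H2 H1] by (simp add: mult_ac)
  qed
  have c: "2 * tot A B H1 * tot A B H2 \<ge> 0" by (simp add: tot_nonneg)
  have "- \<bar>sint2 K H1 H2 - sint2 K H2 H1\<bar> \<ge> 0"
  proof (rule eps_nonneg[OF c])
    fix \<epsilon> :: real assume "\<epsilon> > 0"
    from bd[OF this] show "- \<bar>sint2 K H1 H2 - sint2 K H2 H1\<bar> \<ge> - (\<epsilon> * (2 * tot A B H1 * tot A B H2))"
      by linarith
  qed
  then show ?thesis by simp
qed




lemma quad_psd:
  fixes K :: "real \<Rightarrow> real \<Rightarrow> real" and v :: "'i \<Rightarrow> real" and H' G :: "'i \<Rightarrow> smeasure"
  assumes AB: "A < B" and Kc: "continuous_on ({A..B} \<times> {A..B}) (\<lambda>(t, s). K t s)"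
    and Kcov: "cov_kernel A B K" and I: "finite I"
    and H': "\<And>i. fin_smeasure A B (H' i)" and G: "\<And>i. fin_smeasure A B (G i)"
  shows "(\<Sum>i\<in>I. \<Sum>j\<in>I. v i * v j * (sint2 K (H' i) (H' j) - sint2 K (H' i) (G j)
            - sint2 K (G i) (H' j) + sint2 K (G i) (G j))) \<ge> 0"
    (is "?Q \<ge> 0")
proof -
  define T where "T i = tot A B (H' i) + tot A B (G i)" for i
  have T0: "T i \<ge> 0" for i unfolding T_def using tot_nonneg by (simp add: add_nonneg_nonneg)
  define R where "R = (\<Sum>i\<in>I. \<bar>v i\<bar> * T i)\<^sup>2"
  have R0: "R \<ge> 0" unfolding R_def by simp
  have main: "?Q \<ge> - (\<epsilon> * R)" if e: "\<epsilon> > 0" for \<epsilon>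
  proof (rule grid_approx[OF AB Kc e])
    fix N x idx assume x: "\<And>a. a < N \<Longrightarrow> x a \<in> {A..B}"
      and ap: "\<And>H1 H2. fin_smeasure A B H1 \<Longrightarrow> fin_smeasure A B H2 \<Longrightarrow>
       \<bar>sint2 K H1 H2 - gridsum K N x idx A B H1 H2\<bar> \<le> \<epsilon> * tot A B H1 * tot A B H2"
    define gs where "gs H1 H2 = gridsum K N x idx A B H1 H2" for H1 H2
    define Qg where "Qg = (\<Sum>i\<in>I. \<Sum>j\<in>I. v i * v j * (gs (H' i) (H' j) - gs (H' i) (G j)
            - gs (G i) (H' j) + gs (G i) (G j)))"
    define U where "U i a = wt idx A B (H' i) a - wt idx A B (G i) a" for i a
    have "Qg = (\<Sum>i\<in>I. \<Sum>j\<in>I. v i * v j * GS K N x (U i) (U j))"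
      unfolding Qg_def gs_def gridsum_GS U_def GS_diff ..
    also have "\<dots> = GS K N x (\<lambda>a. \<Sum>i\<in>I. v i * U i a) (\<lambda>b. \<Sum>j\<in>I. v j * U j b)"
      by (rule GS_lin[symmetric])
    also have "\<dots> \<ge> 0" by (rule GS_psd[OF Kcov x])
    finally have Qg0: "Qg \<ge> 0" .
    define X where "X i j = (sint2 K (H' i) (H' j) - gs (H' i) (H' j)) - (sint2 K (H' i) (G j) - gs (H' i) (G j))
       - (sint2 K (G i) (H' j) - gs (G i) (H' j)) + (sint2 K (G i) (G j) - gs (G i) (G j))" for i j
    have Xb: "\<bar>X i j\<bar> \<le> \<epsilon> * (T i * T j)" for i j
    proof -
      have "\<bar>X i j\<bar> \<le> \<epsilon> * tot A B (H' i) * tot A B (H' j) + \<epsilon> * tot A B (H' i) * tot A B (G j)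
          + \<epsilon> * tot A B (G i) * tot A B (H' j) + \<epsilon> * tot A B (G i) * tot A B (G j)"
        using ap[OF H' H', of i j] ap[OF H' G, of i j] ap[OF G H', of i j] ap[OF G G, of i j]
        unfolding X_def gs_def by linarith
      also have "\<dots> = \<epsilon> * (T i * T j)" unfolding T_def by (simp add: algebra_simps)
      finally show ?thesis .
    qed
    have "?Q - Qg = (\<Sum>i\<in>I. \<Sum>j\<in>I. v i * v j * X i j)"
      unfolding Qg_def X_def by (simp add: sum_subtractf[symmetric] algebra_simps)
    also have "\<bar>\<dots>\<bar> \<le> (\<Sum>i\<in>I. \<Sum>j\<in>I. \<bar>v i * v j * X i j\<bar>)"
      by (rule order_trans[OF sum_abs]) (intro sum_mono sum_abs)
    also have "\<dots> \<le> (\<Sum>i\<in>I. \<Sum>j\<in>I. \<epsilon> * ((\<bar>v i\<bar> * T i) * (\<bar>v j\<bar> * T j)))"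
    proof (intro sum_mono)
      fix i j
      have "\<bar>v i * v j * X i j\<bar> = \<bar>v i\<bar> * \<bar>v j\<bar> * \<bar>X i j\<bar>" by (simp add: abs_mult)
      also have "\<dots> \<le> \<bar>v i\<bar> * \<bar>v j\<bar> * (\<epsilon> * (T i * T j))"
        by (rule mult_left_mono[OF Xb]) simp
      finally show "\<bar>v i * v j * X i j\<bar> \<le> \<epsilon> * ((\<bar>v i\<bar> * T i) * (\<bar>v j\<bar> * T j))" by (simp add: mult_ac)
    qed
    also have "\<dots> = \<epsilon> * R"
    proof -
      have "R = (\<Sum>i\<in>I. \<Sum>j\<in>I. (\<bar>v i\<bar> * T i) * (\<bar>v j\<bar> * T j))"
        unfolding R_def power2_eq_square by (rule sum_product)
      then show ?thesis by (simp add: sum_distrib_left)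
    qed
    finally have "\<bar>?Q - Qg\<bar> \<le> \<epsilon> * R" .
    then show ?thesis using Qg0 by linarith
  qed
  show ?thesis by (rule eps_nonneg[OF R0 main])
qed




lemma abs_int_bound:
  fixes f g :: "'a \<Rightarrow> real"
  assumes "integrable M f" "integrable M g" "\<And>x. x \<in> space M \<Longrightarrow> \<bar>f x\<bar> \<le> g x"
  shows "\<bar>integral\<^sup>L M f\<bar> \<le> integral\<^sup>L M g"
proof -
  have "integral\<^sup>L M f \<le> integral\<^sup>L M g"
    by (rule integral_mono) (use assms in \<open>auto simp: abs_le_iff\<close>)
  moreover have "integral\<^sup>L M (\<lambda>x. - f x) \<le> integral\<^sup>L M g"
    by (rule integral_mono) (use assms in \<open>auto simp: abs_le_iff\<close>)
  ultimately show ?thesis by simp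
qed

definition L2 :: "'a measure \<Rightarrow> ('a \<Rightarrow> real) \<Rightarrow> bool" where
  "L2 M u \<longleftrightarrow> u \<in> borel_measurable M \<and> integrable M (\<lambda>x. (u x)\<^sup>2)"

lemma L2_prod:
  assumes "L2 M u" "L2 M w"
  shows "integrable M (\<lambda>x. u x * w x)"
proof (rule Bochner_Integration.integrable_bound)
  show "integrable M (\<lambda>x. ((u x)\<^sup>2 + (w x)\<^sup>2) / 2)" using assms unfolding L2_def by auto
  show "(\<lambda>x. u x * w x) \<in> borel_measurable M" using assms unfolding L2_def by auto
  show "AE x in M. norm (u x * w x) \<le> norm (((u x)\<^sup>2 + (w x)\<^sup>2) / 2)"
  proof (rule AE_I2)
    fix x
    have "0 \<le> (\<bar>u x\<bar> - \<bar>w x\<bar>)\<^sup>2" by simp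
    then have "\<bar>u x\<bar> * \<bar>w x\<bar> \<le> ((u x)\<^sup>2 + (w x)\<^sup>2) / 2"
      by (simp add: power2_eq_square algebra_simps)
    then show "norm (u x * w x) \<le> norm (((u x)\<^sup>2 + (w x)\<^sup>2) / 2)" by (simp add: abs_mult)
  qed
qed

lemma L2_add:
  assumes "L2 M u" "L2 M w"
  shows "L2 M (\<lambda>x. u x + w x)"
proof -
  have "integrable M (\<lambda>x. (u x)\<^sup>2 + (w x)\<^sup>2 + 2 * (u x * w x))"
    using assms L2_prod[OF assms] unfolding L2_def by auto
  moreover have "(\<lambda>x. u x + w x) \<in> borel_measurable M" using assms unfolding L2_def by auto
  ultimately show ?thesis unfolding L2_def by (simp add: power2_sum mult.assoc)
qed

lemma L2_cmult:
  assumes "L2 M u"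
  shows "L2 M (\<lambda>x. c * u x)"
  using assms unfolding L2_def by (auto simp: power_mult_distrib intro!: borel_measurable_times)

lemma L2_diff:
  assumes "L2 M u" "L2 M w"
  shows "L2 M (\<lambda>x. u x - w x)"
  using L2_add[OF assms(1) L2_cmult[OF assms(2), of "-1"]] by simp

lemma L2_sum:
  assumes "finite I" "\<And>i. i \<in> I \<Longrightarrow> L2 M (u i)"
  shows "L2 M (\<lambda>x. \<Sum>i\<in>I. u i x)"
  using assms
proof (induction I rule: finite_induct)
  case empty then show ?case unfolding L2_def by simp
next
  case (insert i I)
  then show ?case using L2_add[of M "u i" "\<lambda>x. \<Sum>i\<in>I. u i x"] by simp
qed

lemma L2_bounded:
  fixes u :: "'a \<Rightarrow> real"
  assumes "finite_measure M" "u \<in> borel_measurable M" "\<And>x. x \<in> space M \<Longrightarrow> \<bar>u x\<bar> \<le> c"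
  shows "L2 M u"
proof -
  interpret finite_measure M by fact
  have "integrable M (\<lambda>x. (u x)\<^sup>2)"
  proof (rule integrable_const_bound[where B="c\<^sup>2"])
    show "AE x in M. norm ((u x)\<^sup>2) \<le> c\<^sup>2"
    proof (rule AE_I2)
      fix x assume x: "x \<in> space M"
      have "\<bar>u x\<bar>\<^sup>2 \<le> c\<^sup>2" by (rule power_mono[OF assms(3)[OF x]]) simp
      then show "norm ((u x)\<^sup>2) \<le> c\<^sup>2" by simp
    qed
    show "(\<lambda>x. (u x)\<^sup>2) \<in> borel_measurable M" using assms(2) by auto
  qed
  then show ?thesis using assms unfolding L2_def by auto
qed

lemma L2_small:
  assumes u: "L2 M u" and w: "L2 M w" and e: "e > 0"
  shows "\<bar>integral\<^sup>L M (\<lambda>x. u x * w x)\<bar> \<le> integral\<^sup>L M (\<lambda>x. (u x)\<^sup>2) / (2 * e) + e / 2 * integral\<^sup>L M (\<lambda>x. (w x)\<^sup>2)"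
proof -
  have "\<bar>integral\<^sup>L M (\<lambda>x. u x * w x)\<bar> \<le> integral\<^sup>L M (\<lambda>x. (u x)\<^sup>2 / (2 * e) + e / 2 * (w x)\<^sup>2)"
  proof (rule abs_int_bound)
    show "integrable M (\<lambda>x. u x * w x)" by (rule L2_prod[OF u w])
    show "integrable M (\<lambda>x. (u x)\<^sup>2 / (2 * e) + e / 2 * (w x)\<^sup>2)" using u w unfolding L2_def by auto
    fix x assume "x \<in> space M"
    have "0 \<le> (\<bar>u x\<bar> - e * \<bar>w x\<bar>)\<^sup>2 / (2 * e)" using e by simp
    then have "\<bar>u x\<bar> * \<bar>w x\<bar> \<le> (u x)\<^sup>2 / (2 * e) + e / 2 * (w x)\<^sup>2"
      using e by (simp add: power2_eq_square field_simps)
    then show "\<bar>u x * w x\<bar> \<le> (u x)\<^sup>2 / (2 * e) + e / 2 * (w x)\<^sup>2" by (simp add: abs_mult)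
  qed
  also have "\<dots> = integral\<^sup>L M (\<lambda>x. (u x)\<^sup>2) / (2 * e) + e / 2 * integral\<^sup>L M (\<lambda>x. (w x)\<^sup>2)"
    using u w unfolding L2_def by simp
  finally show ?thesis .
qed

lemma L2_unif:
  assumes u: "\<And>n. L2 M (u n)" and lim: "(\<lambda>n. integral\<^sup>L M (\<lambda>x. (u n x)\<^sup>2)) \<longlonglongrightarrow> 0"
    and w: "\<And>s. s \<in> S \<Longrightarrow> L2 M (w s)" and wb: "\<And>s. s \<in> S \<Longrightarrow> integral\<^sup>L M (\<lambda>x. (w s x)\<^sup>2) \<le> W"
    and eps: "\<epsilon> > 0"
  shows "eventually (\<lambda>n. \<forall>s\<in>S. \<bar>integral\<^sup>L M (\<lambda>x. u n x * w s x)\<bar> \<le> \<epsilon>) sequentially"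
proof -
  define e where "e = \<epsilon> / (\<bar>W\<bar> + 1)"
  have e0: "e > 0" unfolding e_def using eps by (simp add: add_pos_nonneg)
  have eW: "e / 2 * W \<le> \<epsilon> / 2"
  proof -
    have "e * W \<le> e * (\<bar>W\<bar> + 1)" using e0 by (intro mult_left_mono) auto
    also have "\<dots> = \<epsilon>" unfolding e_def by (simp add: add_pos_nonneg)
    finally show ?thesis by simp
  qed
  have "eventually (\<lambda>n. dist (integral\<^sup>L M (\<lambda>x. (u n x)\<^sup>2)) 0 < \<epsilon> * e) sequentially"
    using lim e0 eps unfolding tendsto_iff by simp
  then show ?thesis
  proof (rule eventually_mono)
    fix n assume n: "dist (integral\<^sup>L M (\<lambda>x. (u n x)\<^sup>2)) 0 < \<epsilon> * e"
    show "\<forall>s\<in>S. \<bar>integral\<^sup>L M (\<lambda>x. u n x * w s x)\<bar> \<le> \<epsilon>"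
    proof
      fix s assume s: "s \<in> S"
      have "\<bar>integral\<^sup>L M (\<lambda>x. u n x * w s x)\<bar> \<le> integral\<^sup>L M (\<lambda>x. (u n x)\<^sup>2) / (2 * e) + e / 2 * integral\<^sup>L M (\<lambda>x. (w s x)\<^sup>2)"
        by (rule L2_small[OF u w[OF s] e0])
      also have "\<dots> \<le> \<epsilon> / 2 + \<epsilon> / 2"
      proof (rule add_mono)
        have "integral\<^sup>L M (\<lambda>x. (u n x)\<^sup>2) < \<epsilon> * e" using n by (simp add: dist_real_def)
        then show "integral\<^sup>L M (\<lambda>x. (u n x)\<^sup>2) / (2 * e) \<le> \<epsilon> / 2" using e0 by (simp add: field_simps)
        have "e / 2 * integral\<^sup>L M (\<lambda>x. (w s x)\<^sup>2) \<le> e / 2 * W" using wb[OF s] e0 by simp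
        then show "e / 2 * integral\<^sup>L M (\<lambda>x. (w s x)\<^sup>2) \<le> \<epsilon> / 2" using eW by linarith
      qed
      finally show "\<bar>integral\<^sup>L M (\<lambda>x. u n x * w s x)\<bar> \<le> \<epsilon>" by simp
    qed
  qed
qed




lemma small_eq0:
  fixes d :: real
  assumes "\<And>\<epsilon>. \<epsilon> > 0 \<Longrightarrow> \<bar>d\<bar> \<le> \<epsilon>"
  shows "d = 0"
proof -
  have "\<bar>d\<bar> \<le> 0" by (rule field_le_epsilon) (use assms in simp)
  then show ?thesis by simp
qed

lemma norm_sq_vec: "(norm (x :: real^'m))\<^sup>2 = (\<Sum>i\<in>UNIV. (x $ i)\<^sup>2)"
  unfolding power2_norm_eq_inner inner_vec_def by (simp add: power2_eq_square)




lemma L2_le: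
  fixes w u :: "'a \<Rightarrow> real"
  assumes "L2 M u" "w \<in> borel_measurable M" "\<And>x. \<bar>w x\<bar> \<le> \<bar>u x\<bar>"
  shows "L2 M w"
proof -
  have "integrable M (\<lambda>x. (w x)\<^sup>2)"
  proof (rule Bochner_Integration.integrable_bound)
    show "integrable M (\<lambda>x. (u x)\<^sup>2)" using assms unfolding L2_def by blast
    show "(\<lambda>x. (w x)\<^sup>2) \<in> borel_measurable M" using assms by measurable
    show "AE x in M. norm ((w x)\<^sup>2) \<le> norm ((u x)\<^sup>2)"
    proof (rule AE_I2)
      fix x have "\<bar>w x\<bar>\<^sup>2 \<le> \<bar>u x\<bar>\<^sup>2" by (rule power_mono[OF assms(3)]) simp
      then show "norm ((w x)\<^sup>2) \<le> norm ((u x)\<^sup>2)" by simp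
    qed
  qed
  then show ?thesis using assms unfolding L2_def by blast
qed

lemma dens_sint:
  fixes h u :: "real \<Rightarrow> real"
  assumes h: "L2 M h" and u: "L2 M u"
  shows "sint (dens_smeasure M h) u = integral\<^sup>L M (\<lambda>t. h t * u t)"
proof -
  have hm: "h \<in> borel_measurable M" using h unfolding L2_def by blast
  have um: "u \<in> borel_measurable M" using u unfolding L2_def by blast
  have p: "L2 M (\<lambda>t. max 0 (h t))" by (rule L2_le[OF h]) (use hm in auto)
  have n: "L2 M (\<lambda>t. max 0 (- h t))" by (rule L2_le[OF h]) (use hm in auto)
  have 1: "integral\<^sup>L (density M (\<lambda>t. ennreal (max 0 (h t)))) u = integral\<^sup>L M (\<lambda>t. max 0 (h t) * u t)"
    using integral_density[OF um, of "\<lambda>t. max 0 (h t)"] hm by simp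
  have 2: "integral\<^sup>L (density M (\<lambda>t. ennreal (max 0 (- h t)))) u = integral\<^sup>L M (\<lambda>t. max 0 (- h t) * u t)"
    using integral_density[OF um, of "\<lambda>t. max 0 (- h t)"] hm by simp
  have "sint (dens_smeasure M h) u = integral\<^sup>L M (\<lambda>t. max 0 (h t) * u t) - integral\<^sup>L M (\<lambda>t. max 0 (- h t) * u t)"
    unfolding sint_def dens_smeasure_def using 1 2 by simp
  also have "\<dots> = integral\<^sup>L M (\<lambda>t. max 0 (h t) * u t - max 0 (- h t) * u t)"
    by (rule Bochner_Integration.integral_diff[OF L2_prod[OF p u] L2_prod[OF n u], symmetric])
  also have "\<dots> = integral\<^sup>L M (\<lambda>t. h t * u t)"
  proof (intro Bochner_Integration.integral_cong refl)
    fix t show "max 0 (h t) * u t - max 0 (- h t) * u t = h t * u t"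
      by (cases "h t \<ge> 0") (auto simp: max_def)
  qed
  finally show ?thesis .
qed

lemma dens_fin:
  fixes h :: "real \<Rightarrow> real"
  assumes sets: "sets M = sets (restrict_space borel {A..B})" and fm: "finite_measure M" and h: "L2 M h"
  shows "fin_smeasure A B (dens_smeasure M h)"
proof -
  interpret finite_measure M by fact
  have hm: "h \<in> borel_measurable M" using h unfolding L2_def by blast
  have one: "L2 M (\<lambda>_. 1)" by (rule L2_bounded[OF fm, of _ 1]) auto
  have hi: "integrable M h" using L2_prod[OF h one] by simp
  then have fin: "(\<integral>\<^sup>+ x. ennreal (norm (h x)) \<partial>M) < \<infinity>" unfolding integrable_iff_bounded by blast
  have "finite_measure (density M (\<lambda>t. ennreal (max 0 (s * h t))))" if s: "s = 1 \<or> s = -1" for s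
  proof (rule finite_measureI)
    have "emeasure (density M (\<lambda>t. ennreal (max 0 (s * h t)))) (space (density M (\<lambda>t. ennreal (max 0 (s * h t)))))
        = (\<integral>\<^sup>+ x. ennreal (max 0 (s * h x)) \<partial>M)"
    proof -
      have Fm: "(\<lambda>t. ennreal (max 0 (s * h t))) \<in> borel_measurable M" using hm by measurable
      have "emeasure (density M (\<lambda>t. ennreal (max 0 (s * h t)))) (space M)
          = (\<integral>\<^sup>+ x. ennreal (max 0 (s * h x)) * indicator (space M) x \<partial>M)"
        by (rule emeasure_density[OF Fm]) simp
      also have "\<dots> = (\<integral>\<^sup>+ x. ennreal (max 0 (s * h x)) \<partial>M)"
        by (intro nn_integral_cong) simp
      finally show ?thesis by simp
    qed
    also have "\<dots> \<le> (\<integral>\<^sup>+ x. ennreal (norm (h x)) \<partial>M)"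
      by (intro nn_integral_mono ennreal_leI) (use s in auto)
    also have "\<dots> < \<infinity>" by (rule fin)
    finally show "emeasure (density M (\<lambda>t. ennreal (max 0 (s * h t)))) (space (density M (\<lambda>t. ennreal (max 0 (s * h t))))) \<noteq> \<infinity>"
      by simp
  qed
  from this[of 1] this[of "-1"] show ?thesis
    unfolding fin_smeasure_def dens_smeasure_def using sets by simp
qed




theorem proposition2p4:
  fixes A B :: real and p :: "real \<Rightarrow> real" and \<nu> :: "real measure"
    and K :: "real \<Rightarrow> real \<Rightarrow> real"
    and \<phi> :: "nat \<Rightarrow> real \<Rightarrow> real" and lam :: "nat \<Rightarrow> real"
    and f :: "real \<Rightarrow> real^'m" and q :: "nat \<Rightarrow> real^'m"
    and g :: "real \<Rightarrow> real^'m"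
  assumes AB: "A < B"
    and nu_def: "\<nu> = density (restrict_space lborel {A..B}) (\<lambda>t. ennreal (p t))"
    and p_meas: "p \<in> borel_measurable (restrict_space lborel {A..B})"
    and p_pos: "\<forall>t\<in>{A..B}. p t > 0"
    and nu_fin: "emeasure \<nu> {A..B} < \<infinity>"
    and K_cont: "continuous_on ({A..B} \<times> {A..B}) (\<lambda>(t, s). K t s)"
    and K_cov: "cov_kernel A B K"
    and phi_L2: "\<forall>l. \<phi> l \<in> borel_measurable \<nu> \<and> integrable \<nu> (\<lambda>t. (\<phi> l t)\<^sup>2)"
    and phi_on: "\<forall>k l. integral\<^sup>L \<nu> (\<lambda>t. \<phi> k t * \<phi> l t) = (if k = l then 1 else 0)"
    and eigen: "\<forall>l. lam l > 0 \<and>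
                  (\<forall>s\<in>{A..B}. integral\<^sup>L \<nu> (\<lambda>t. K t s * \<phi> l t) = lam l * \<phi> l s)"
    and f_exp: "\<forall>t\<in>{A..B}. (\<lambda>l. \<phi> l t *\<^sub>R q l) sums f t"
    and f_indep: "\<forall>c::real^'m. (\<forall>t\<in>{A..B}. c \<bullet> f t = 0) \<longrightarrow> c = 0"
    and g_L2: "g \<in> borel_measurable \<nu> \<and> integrable \<nu> (\<lambda>t. (norm (g t))\<^sup>2)"
    and g_lim: "(\<lambda>n. integral\<^sup>L \<nu>
                   (\<lambda>t. (norm (g t - (\<Sum>l<n. (\<phi> l t / lam l) *\<^sub>R q l)))\<^sup>2)) \<longlonglongrightarrow> 0"
  defines "C \<equiv> (\<Sum>l. (1 / lam l) *\<^sub>R outer (q l) (q l))"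
  defines "G \<equiv> (\<lambda>i. dens_smeasure \<nu> (\<lambda>t. (matrix_inv C *v g t) $ i))"
  shows "summable (\<lambda>l. (1 / lam l) *\<^sub>R outer (q l) (q l))
         \<and> BLUE A B f K G \<and> covm K G = matrix_inv C"
proof -
  have sets_nu: "sets \<nu> = sets (restrict_space borel {A..B})"
    unfolding nu_def by (simp add: sets_restrict_space)
  have space_nu: "space \<nu> = {A..B}" using sets_eq_imp_space_eq[OF sets_nu] by simp
  have fin_nu: "finite_measure \<nu>" by (rule finite_measureI) (use nu_fin space_nu in simp)
  interpret nu: finite_measure \<nu> by (rule fin_nu)
  have mconv: "u \<in> borel_measurable (restrict_space borel {A..B}) \<longleftrightarrow> u \<in> borel_measurable \<nu>"
    for u :: "real \<Rightarrow> real"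
    using measurable_cong_sets[OF sets_nu refl, where N="borel :: real measure"] by auto
  obtain Mk where Mk0: "Mk > 0" and Mk: "\<And>t s. t \<in> {A..B} \<Longrightarrow> s \<in> {A..B} \<Longrightarrow> \<bar>K t s\<bar> \<le> Mk"
    using K_bounded[OF K_cont] by metis
  have lam0: "lam l > 0" for l using eigen by blast
  have phiL2: "L2 \<nu> (\<phi> l)" for l using phi_L2 unfolding L2_def by blast
  have phi_sq: "integral\<^sup>L \<nu> (\<lambda>t. (\<phi> l t)\<^sup>2) = 1" for l
    using phi_on[rule_format, of l l] by (simp add: power2_eq_square)
  have vm: "(\<lambda>x::real^'m. x $ a) \<in> borel_measurable borel" for a
    by (intro borel_measurable_continuous_onI continuous_on_component continuous_on_id)
  have gm: "(\<lambda>t. g t $ a) \<in> borel_measurable \<nu>" for a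
    using measurable_compose[OF conjunct1[OF g_L2] vm] by simp
  have gL2: "L2 \<nu> (\<lambda>t. g t $ a)" for a
  proof -
    have "integrable \<nu> (\<lambda>t. (g t $ a)\<^sup>2)"
    proof (rule Bochner_Integration.integrable_bound)
      show "integrable \<nu> (\<lambda>t. (norm (g t))\<^sup>2)" using g_L2 by blast
      show "(\<lambda>t. (g t $ a)\<^sup>2) \<in> borel_measurable \<nu>" using gm by measurable
      show "AE t in \<nu>. norm ((g t $ a)\<^sup>2) \<le> norm ((norm (g t))\<^sup>2)"
      proof (rule AE_I2)
        fix t
        have "\<bar>g t $ a\<bar>\<^sup>2 \<le> (norm (g t))\<^sup>2" by (rule power_mono[OF component_le_norm_cart]) simp
        then show "norm ((g t $ a)\<^sup>2) \<le> norm ((norm (g t))\<^sup>2)" by simp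
      qed
    qed
    then show ?thesis using gm unfolding L2_def by blast
  qed
  have KL2: "L2 \<nu> (\<lambda>t. K t s)" "integral\<^sup>L \<nu> (\<lambda>t. (K t s)\<^sup>2) \<le> Mk\<^sup>2 * measure \<nu> {A..B}"
    if s: "s \<in> {A..B}" for s
  proof -
    have m: "(\<lambda>t. K t s) \<in> borel_measurable \<nu>" using K_slice_meas[OF K_cont s] mconv by blast
    show "L2 \<nu> (\<lambda>t. K t s)" by (rule L2_bounded[OF fin_nu m]) (use Mk s space_nu in auto)
    then have "integral\<^sup>L \<nu> (\<lambda>t. (K t s)\<^sup>2) \<le> integral\<^sup>L \<nu> (\<lambda>t. Mk\<^sup>2)"
    proof (intro integral_mono)
      fix t assume t: "t \<in> space \<nu>"
      have "\<bar>K t s\<bar>\<^sup>2 \<le> Mk\<^sup>2" by (rule power_mono[OF Mk]) (use t s space_nu in auto)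
      then show "(K t s)\<^sup>2 \<le> Mk\<^sup>2" by simp
    qed (auto simp: L2_def)
    then show "integral\<^sup>L \<nu> (\<lambda>t. (K t s)\<^sup>2) \<le> Mk\<^sup>2 * measure \<nu> {A..B}" using space_nu by (simp add: mult.commute)
  qed
  define P where "P n t = (\<Sum>l<n. (\<phi> l t / lam l) *\<^sub>R q l)" for n t
  have Pc: "P n t $ a = (\<Sum>l<n. \<phi> l t / lam l * q l $ a)" for n t a
    unfolding P_def by simp
  have PL2: "L2 \<nu> (\<lambda>t. P n t $ a)" for n a
  proof -
    have "L2 \<nu> (\<lambda>t. \<phi> l t / lam l * q l $ a)" for l
      using L2_cmult[OF phiL2[of l], of "q l $ a / lam l"] by (simp add: mult_ac)
    then show ?thesis unfolding Pc by (intro L2_sum) auto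
  qed
  define u where "u n a t = g t $ a - P n t $ a" for n a t
  have uL2: "L2 \<nu> (u n a)" for n a unfolding u_def by (rule L2_diff[OF gL2 PL2])
  have ulim: "(\<lambda>n. integral\<^sup>L \<nu> (\<lambda>t. (u n a t)\<^sup>2)) \<longlonglongrightarrow> 0" for a
  proof (rule tendsto_sandwich[OF _ _ tendsto_const g_lim[folded P_def]])
    show "\<forall>\<^sub>F n in sequentially. 0 \<le> integral\<^sup>L \<nu> (\<lambda>t. (u n a t)\<^sup>2)" by simp
    show "\<forall>\<^sub>F n in sequentially. integral\<^sup>L \<nu> (\<lambda>t. (u n a t)\<^sup>2) \<le> integral\<^sup>L \<nu> (\<lambda>t. (norm (g t - P n t))\<^sup>2)"
    proof (intro always_eventually allI integral_mono)
      fix n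
      have eq: "(norm (g t - P n t))\<^sup>2 = (\<Sum>b\<in>UNIV. (u n b t)\<^sup>2)" for t
        unfolding norm_sq_vec u_def by simp
      show "integrable \<nu> (\<lambda>t. (norm (g t - P n t))\<^sup>2)"
        unfolding eq using uL2 unfolding L2_def by auto
      show "integrable \<nu> (\<lambda>t. (u n a t)\<^sup>2)" using uL2 unfolding L2_def by auto
      fix t show "(u n a t)\<^sup>2 \<le> (norm (g t - P n t))\<^sup>2"
        unfolding eq by (rule member_le_sum) auto
    qed
  qed
  have intP: "integral\<^sup>L \<nu> (\<lambda>t. P n t $ a * w t) = (\<Sum>k<n. (q k $ a / lam k) * integral\<^sup>L \<nu> (\<lambda>t. \<phi> k t * w t))"
    if w: "L2 \<nu> w" for n a w
  proof -
    have "integral\<^sup>L \<nu> (\<lambda>t. P n t $ a * w t) = integral\<^sup>L \<nu> (\<lambda>t. \<Sum>k<n. (q k $ a / lam k) * (\<phi> k t * w t))"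
    proof -
      have eq: "P n t $ a * w t = (\<Sum>k<n. (q k $ a / lam k) * (\<phi> k t * w t))" for t
        unfolding Pc sum_distrib_right by (intro sum.cong refl) simp
      show ?thesis by (simp only: eq)
    qed
    also have "\<dots> = (\<Sum>k<n. integral\<^sup>L \<nu> (\<lambda>t. (q k $ a / lam k) * (\<phi> k t * w t)))"
      by (rule Bochner_Integration.integral_sum) (use L2_prod[OF phiL2 w] in auto)
    also have "\<dots> = (\<Sum>k<n. (q k $ a / lam k) * integral\<^sup>L \<nu> (\<lambda>t. \<phi> k t * w t))"
      by simp
    finally show ?thesis .
  qed
  have coef: "integral\<^sup>L \<nu> (\<lambda>t. g t $ a * \<phi> l t) = q l $ a / lam l" for a l
  proof -
    have "integral\<^sup>L \<nu> (\<lambda>t. g t $ a * \<phi> l t) - q l $ a / lam l = 0"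
    proof (rule small_eq0)
      fix \<epsilon> :: real assume e: "\<epsilon> > 0"
      have "eventually (\<lambda>n. \<forall>s\<in>(UNIV::unit set). \<bar>integral\<^sup>L \<nu> (\<lambda>x. u n a x * \<phi> l x)\<bar> \<le> \<epsilon>) sequentially"
        by (rule L2_unif[OF uL2 ulim, of UNIV "\<lambda>_. \<phi> l" 1]) (use phiL2 phi_sq e in auto)
      then obtain N where N: "\<And>n. n \<ge> N \<Longrightarrow> \<bar>integral\<^sup>L \<nu> (\<lambda>x. u n a x * \<phi> l x)\<bar> \<le> \<epsilon>"
        unfolding eventually_sequentially by blast
      define n where "n = max N (Suc l)"
      have ln: "l < n" "n \<ge> N" unfolding n_def by auto
      have "integral\<^sup>L \<nu> (\<lambda>t. P n t $ a * \<phi> l t) = (\<Sum>k<n. (q k $ a / lam k) * (if k = l then 1 else 0))"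
        unfolding intP[OF phiL2] using phi_on by simp
      also have "\<dots> = (\<Sum>k<n. if k = l then q k $ a / lam k else 0)" by (intro sum.cong refl) simp
      also have "\<dots> = q l $ a / lam l" using ln(1) by (simp add: sum.delta)
      finally have pl: "integral\<^sup>L \<nu> (\<lambda>t. P n t $ a * \<phi> l t) = q l $ a / lam l" .
      have "integral\<^sup>L \<nu> (\<lambda>x. u n a x * \<phi> l x) = integral\<^sup>L \<nu> (\<lambda>t. g t $ a * \<phi> l t) - integral\<^sup>L \<nu> (\<lambda>t. P n t $ a * \<phi> l t)"
        unfolding u_def left_diff_distrib
        by (rule Bochner_Integration.integral_diff[OF L2_prod[OF gL2 phiL2] L2_prod[OF PL2 phiL2]])
      then show "\<bar>integral\<^sup>L \<nu> (\<lambda>t. g t $ a * \<phi> l t) - q l $ a / lam l\<bar> \<le> \<epsilon>"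
        using N[OF ln(2)] pl by simp
    qed
    then show ?thesis by simp
  qed
  define Fs where "Fs n s = (\<Sum>k<n. \<phi> k s *\<^sub>R q k)" for n s
  have Fsc: "Fs n s $ b = (\<Sum>k<n. \<phi> k s * q k $ b)" for n s b unfolding Fs_def by simp
  have Fs_lim: "(\<lambda>n. Fs n s $ b) \<longlonglongrightarrow> f s $ b" if s: "s \<in> {A..B}" for s b
  proof -
    have "(\<lambda>n. Fs n s) \<longlonglongrightarrow> f s" using f_exp s unfolding sums_def Fs_def by blast
    then show ?thesis by (intro tendsto_intros)
  qed
  define E where "E n b s = integral\<^sup>L \<nu> (\<lambda>t. u n b t * K t s)" for n b s
  have Eunif: "eventually (\<lambda>n. \<forall>s\<in>{A..B}. \<bar>E n b s\<bar> \<le> \<epsilon>) sequentially" if e: "\<epsilon> > 0" for \<epsilon> b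
    unfolding E_def by (rule L2_unif[OF uL2 ulim KL2(1) KL2(2) e])
  have TG: "integral\<^sup>L \<nu> (\<lambda>t. g t $ b * K t s) = Fs n s $ b + E n b s" if s: "s \<in> {A..B}" for n b s
  proof -
    have "integral\<^sup>L \<nu> (\<lambda>t. P n t $ b * K t s) = (\<Sum>k<n. (q k $ b / lam k) * integral\<^sup>L \<nu> (\<lambda>t. \<phi> k t * K t s))"
      by (rule intP[OF KL2(1)[OF s]])
    also have "\<dots> = (\<Sum>k<n. (q k $ b / lam k) * (lam k * \<phi> k s))"
      using eigen s by (simp add: mult.commute)
    also have "\<dots> = Fs n s $ b" unfolding Fsc
    proof (intro sum.cong refl)
      fix k have "lam k \<noteq> 0" using lam0[of k] by simp
      then show "q k $ b / lam k * (lam k * \<phi> k s) = \<phi> k s * q k $ b" by (simp add: field_simps)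
    qed
    finally have 1: "integral\<^sup>L \<nu> (\<lambda>t. P n t $ b * K t s) = Fs n s $ b" .
    have "E n b s = integral\<^sup>L \<nu> (\<lambda>t. g t $ b * K t s) - integral\<^sup>L \<nu> (\<lambda>t. P n t $ b * K t s)"
      unfolding E_def u_def left_diff_distrib
      by (rule Bochner_Integration.integral_diff[OF L2_prod[OF gL2 KL2(1)[OF s]] L2_prod[OF PL2 KL2(1)[OF s]]])
    then show ?thesis using 1 by simp
  qed
  have tg: "integral\<^sup>L \<nu> (\<lambda>t. g t $ b * K t s) = f s $ b" if s: "s \<in> {A..B}" for b s
  proof -
    have "(\<lambda>n. E n b s) \<longlonglongrightarrow> 0"
    proof (rule tendstoI)
      fix \<epsilon> :: real assume "\<epsilon> > 0"
      then have "eventually (\<lambda>n. \<forall>s\<in>{A..B}. \<bar>E n b s\<bar> \<le> \<epsilon>/2) sequentially" by (intro Eunif) simp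
      then show "eventually (\<lambda>n. dist (E n b s) 0 < \<epsilon>) sequentially"
      proof (rule eventually_mono)
        fix n assume "\<forall>s\<in>{A..B}. \<bar>E n b s\<bar> \<le> \<epsilon>/2"
        then have "\<bar>E n b s\<bar> \<le> \<epsilon>/2" using s by blast
        then show "dist (E n b s) 0 < \<epsilon>" using \<open>\<epsilon> > 0\<close> by simp
      qed
    qed
    then have "(\<lambda>n. Fs n s $ b + E n b s) \<longlonglongrightarrow> f s $ b + 0" by (intro tendsto_add Fs_lim[OF s])
    then have "(\<lambda>n. integral\<^sup>L \<nu> (\<lambda>t. g t $ b * K t s)) \<longlonglongrightarrow> f s $ b" using TG[OF s] by simp
    then show ?thesis by (simp add: LIMSEQ_const_iff)
  qed
  have funif: "eventually (\<lambda>n. \<forall>s\<in>{A..B}. \<bar>f s $ b - Fs n s $ b\<bar> \<le> \<epsilon>) sequentially" if e: "\<epsilon> > 0" for \<epsilon> b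
    using Eunif[OF e, of b]
  proof (rule eventually_mono)
    fix n assume h: "\<forall>s\<in>{A..B}. \<bar>E n b s\<bar> \<le> \<epsilon>"
    show "\<forall>s\<in>{A..B}. \<bar>f s $ b - Fs n s $ b\<bar> \<le> \<epsilon>"
    proof
      fix s assume s: "s \<in> {A..B}"
      have "f s $ b - Fs n s $ b = E n b s" using TG[OF s, of b n] tg[OF s, of b] by simp
      then show "\<bar>f s $ b - Fs n s $ b\<bar> \<le> \<epsilon>" using h s by simp
    qed
  qed
  have oneL2: "L2 \<nu> (\<lambda>_. 1)" by (rule L2_bounded[OF fin_nu, of _ 1]) auto
  have gint: "integrable \<nu> (\<lambda>t. g t $ a)" for a using L2_prod[OF gL2 oneL2] by simp
  have FsL2: "L2 \<nu> (\<lambda>s. Fs n s $ b)" for n b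
  proof -
    have "L2 \<nu> (\<lambda>t. \<phi> l t * q l $ b)" for l
      using L2_cmult[OF phiL2[of l], of "q l $ b"] by (simp add: mult_ac)
    then show ?thesis unfolding Fsc by (intro L2_sum) auto
  qed
  have fm: "(\<lambda>s. f s $ b) \<in> borel_measurable \<nu>" for b
  proof (rule borel_measurable_LIMSEQ_real)
    show "(\<lambda>n. Fs n s $ b) \<longlonglongrightarrow> f s $ b" if "s \<in> space \<nu>" for s using that space_nu Fs_lim by simp
    show "(\<lambda>s. Fs n s $ b) \<in> borel_measurable \<nu>" for n using FsL2 unfolding L2_def by blast
  qed
  define Gb where "Gb a = integral\<^sup>L \<nu> (\<lambda>t. \<bar>g t $ a\<bar>)" for a
  have fbnd: "\<bar>f s $ b\<bar> \<le> Mk * Gb b" if s: "s \<in> {A..B}" for s b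
  proof -
    have "\<bar>integral\<^sup>L \<nu> (\<lambda>t. g t $ b * K t s)\<bar> \<le> integral\<^sup>L \<nu> (\<lambda>t. Mk * \<bar>g t $ b\<bar>)"
    proof (rule abs_int_bound)
      show "integrable \<nu> (\<lambda>t. g t $ b * K t s)" by (rule L2_prod[OF gL2 KL2(1)[OF s]])
      show "integrable \<nu> (\<lambda>t. Mk * \<bar>g t $ b\<bar>)" using gint by auto
      fix t assume t: "t \<in> space \<nu>"
      have "\<bar>g t $ b\<bar> * \<bar>K t s\<bar> \<le> \<bar>g t $ b\<bar> * Mk" by (rule mult_left_mono[OF Mk]) (use t s space_nu in auto)
      then show "\<bar>g t $ b * K t s\<bar> \<le> Mk * \<bar>g t $ b\<bar>" by (simp add: abs_mult mult_ac)
    qed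
    then show ?thesis using tg[OF s] unfolding Gb_def by simp
  qed
  have fL2: "L2 \<nu> (\<lambda>s. f s $ b)" for b
    by (rule L2_bounded[OF fin_nu fm]) (use fbnd space_nu in auto)
  define Cp where "Cp n = (\<Sum>l<n. (1 / lam l) *\<^sub>R outer (q l) (q l))" for n
  have Cpc: "Cp n $ a $ b = (\<Sum>l<n. q l $ a * q l $ b / lam l)" for n a b
    unfolding Cp_def outer_def by (simp add: sum_component)
  have Cp_lim: "(\<lambda>n. Cp n $ a $ b) \<longlonglongrightarrow> integral\<^sup>L \<nu> (\<lambda>t. g t $ a * f t $ b)" for a b
  proof (rule tendstoI)
    fix \<epsilon> :: real assume e: "\<epsilon> > 0"
    define \<delta> where "\<delta> = \<epsilon> / (2 * (\<bar>Gb a\<bar> + 1))"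
    have d0: "\<delta> > 0" unfolding \<delta>_def using e by (simp add: add_pos_nonneg)
    have dG: "\<delta> * \<bar>Gb a\<bar> < \<epsilon>"
    proof -
      have "\<delta> * \<bar>Gb a\<bar> \<le> \<delta> * (\<bar>Gb a\<bar> + 1)" using d0 by simp
      also have "\<dots> = \<epsilon> / 2"
      proof -
        have nz: "\<bar>Gb a\<bar> + 1 > 0" by (simp add: add_pos_nonneg)
        then show ?thesis unfolding \<delta>_def by (simp add: field_simps)
      qed
      finally show ?thesis using e by simp
    qed
    show "eventually (\<lambda>n. dist (Cp n $ a $ b) (integral\<^sup>L \<nu> (\<lambda>t. g t $ a * f t $ b)) < \<epsilon>) sequentially"
      using funif[OF d0, of b]
    proof (rule eventually_mono)
      fix n assume h: "\<forall>s\<in>{A..B}. \<bar>f s $ b - Fs n s $ b\<bar> \<le> \<delta>"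
      have "integral\<^sup>L \<nu> (\<lambda>t. Fs n t $ b * g t $ a) = (\<Sum>k<n. q k $ b * integral\<^sup>L \<nu> (\<lambda>t. \<phi> k t * g t $ a))"
      proof -
        have eq: "Fs n t $ b * g t $ a = (\<Sum>k<n. q k $ b * (\<phi> k t * g t $ a))" for t
          unfolding Fsc sum_distrib_right by (intro sum.cong refl) simp
        have "integral\<^sup>L \<nu> (\<lambda>t. Fs n t $ b * g t $ a) = (\<Sum>k<n. integral\<^sup>L \<nu> (\<lambda>t. q k $ b * (\<phi> k t * g t $ a)))"
          unfolding eq by (rule Bochner_Integration.integral_sum) (use L2_prod[OF phiL2 gL2] in auto)
        then show ?thesis by simp
      qed
      also have "\<dots> = Cp n $ a $ b" unfolding Cpc
        using coef by (intro sum.cong refl) (simp add: mult.commute)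
      finally have 1: "integral\<^sup>L \<nu> (\<lambda>t. Fs n t $ b * g t $ a) = Cp n $ a $ b" .
      have "integral\<^sup>L \<nu> (\<lambda>t. g t $ a * f t $ b) - Cp n $ a $ b
          = integral\<^sup>L \<nu> (\<lambda>t. (f t $ b - Fs n t $ b) * g t $ a)"
        unfolding 1[symmetric] left_diff_distrib
        by (subst Bochner_Integration.integral_diff[OF L2_prod[OF fL2 gL2] L2_prod[OF FsL2 gL2]]) (simp add: mult.commute)
      also have "\<bar>\<dots>\<bar> \<le> integral\<^sup>L \<nu> (\<lambda>t. \<delta> * \<bar>g t $ a\<bar>)"
      proof (rule abs_int_bound)
        show "integrable \<nu> (\<lambda>t. (f t $ b - Fs n t $ b) * g t $ a)" by (rule L2_prod[OF L2_diff[OF fL2 FsL2] gL2])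
        show "integrable \<nu> (\<lambda>t. \<delta> * \<bar>g t $ a\<bar>)" using gint by auto
        fix t assume t: "t \<in> space \<nu>"
        have "\<bar>f t $ b - Fs n t $ b\<bar> * \<bar>g t $ a\<bar> \<le> \<delta> * \<bar>g t $ a\<bar>"
          by (rule mult_right_mono) (use h t space_nu in auto)
        then show "\<bar>(f t $ b - Fs n t $ b) * g t $ a\<bar> \<le> \<delta> * \<bar>g t $ a\<bar>" by (simp add: abs_mult)
      qed
      also have "\<dots> = \<delta> * Gb a" unfolding Gb_def by simp
      also have "\<dots> \<le> \<delta> * \<bar>Gb a\<bar>" using d0 by simp
      finally show "dist (Cp n $ a $ b) (integral\<^sup>L \<nu> (\<lambda>t. g t $ a * f t $ b)) < \<epsilon>"
        using dG by (simp add: dist_real_def abs_minus_commute)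
    qed
  qed
  define Mm :: "real^'m^'m" where "Mm = (\<chi> a b. integral\<^sup>L \<nu> (\<lambda>t. g t $ a * f t $ b))"
  have "Cp \<longlonglongrightarrow> Mm"
    unfolding Mm_def by (intro vec_tendstoI) (simp add: vec_tendstoI Cp_lim)
  then have sums_C: "(\<lambda>l. (1 / lam l) *\<^sub>R outer (q l) (q l)) sums Mm"
    unfolding sums_def Cp_def .
  have summ: "summable (\<lambda>l. (1 / lam l) *\<^sub>R outer (q l) (q l))" using sums_C by (rule sums_summable)
  have CM: "C = Mm" unfolding C_def using sums_C by (rule sums_unique[symmetric])
  have Cab: "C $ a $ b = integral\<^sup>L \<nu> (\<lambda>t. g t $ a * f t $ b)" for a b unfolding CM Mm_def by simp
  have ker: "c = 0" if Cc: "C *v c = 0" for c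
  proof -
    define Sq where "Sq n = (\<Sum>l<n. (c \<bullet> q l)\<^sup>2 / lam l)" for n
    have Sq_eq: "Sq n = (\<Sum>a\<in>UNIV. \<Sum>b\<in>UNIV. c $ a * Cp n $ a $ b * c $ b)" for n
    proof -
      have "(\<Sum>a\<in>UNIV. \<Sum>b\<in>UNIV. c $ a * Cp n $ a $ b * c $ b)
          = (\<Sum>a\<in>UNIV. \<Sum>b\<in>UNIV. \<Sum>l<n. c $ a * q l $ a * (c $ b * q l $ b) / lam l)"
        unfolding Cpc by (simp add: sum_distrib_left sum_distrib_right mult_ac)
      also have "\<dots> = (\<Sum>a\<in>UNIV. \<Sum>l<n. \<Sum>b\<in>UNIV. c $ a * q l $ a * (c $ b * q l $ b) / lam l)"
        by (intro sum.cong refl) (rule sum.swap)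
      also have "\<dots> = (\<Sum>l<n. \<Sum>a\<in>UNIV. \<Sum>b\<in>UNIV. c $ a * q l $ a * (c $ b * q l $ b) / lam l)"
        by (rule sum.swap)
      also have "\<dots> = Sq n"
        unfolding Sq_def
      proof (intro sum.cong refl)
        fix l
        have "(c \<bullet> q l)\<^sup>2 / lam l = (\<Sum>a\<in>UNIV. c $ a * q l $ a) * (\<Sum>b\<in>UNIV. c $ b * q l $ b) / lam l"
          unfolding inner_vec_def power2_eq_square inner_real_def ..
        also have "\<dots> = (\<Sum>a\<in>UNIV. \<Sum>b\<in>UNIV. c $ a * q l $ a * (c $ b * q l $ b) / lam l)"
          unfolding sum_product sum_divide_distrib ..
        finally show "(\<Sum>a\<in>UNIV. \<Sum>b\<in>UNIV. c $ a * q l $ a * (c $ b * q l $ b) / lam l) = (c \<bullet> q l)\<^sup>2 / lam l" ..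
      qed
      finally show ?thesis ..
    qed
    have "Sq \<longlonglongrightarrow> (\<Sum>a\<in>UNIV. \<Sum>b\<in>UNIV. c $ a * C $ a $ b * c $ b)"
      unfolding Sq_eq Cab by (intro tendsto_sum tendsto_mult tendsto_const Cp_lim)
    also have "(\<Sum>a\<in>UNIV. \<Sum>b\<in>UNIV. c $ a * C $ a $ b * c $ b) = c \<bullet> (C *v c)"
      unfolding inner_vec_def matrix_vector_mult_def by (simp add: sum_distrib_left mult_ac)
    also have "\<dots> = 0" using Cc by simp
    finally have Sq_lim: "Sq \<longlonglongrightarrow> 0" .
    have inc: "incseq Sq"
    proof (rule incseq_SucI)
      fix n have "(c \<bullet> q n)\<^sup>2 / lam n \<ge> 0" using lam0[of n] by simp
      then show "Sq n \<le> Sq (Suc n)" unfolding Sq_def by simp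
    qed
    have Sq0: "Sq n = 0" for n
    proof -
      have "Sq n \<le> 0" by (rule incseq_le[OF inc Sq_lim])
      moreover have "Sq n \<ge> 0" unfolding Sq_def by (intro sum_nonneg divide_nonneg_pos) (auto simp: lam0)
      ultimately show ?thesis by simp
    qed
    have cq: "c \<bullet> q l = 0" for l
    proof -
      have "(c \<bullet> q l)\<^sup>2 / lam l = Sq (Suc l) - Sq l" unfolding Sq_def by simp
      then have "(c \<bullet> q l)\<^sup>2 / lam l = 0" using Sq0 by simp
      then show ?thesis using lam0[of l] by simp
    qed
    have "c \<bullet> f t = 0" if t: "t \<in> {A..B}" for t
    proof -
      have "(\<lambda>n. c \<bullet> Fs n t) \<longlonglongrightarrow> c \<bullet> f t"
        using f_exp t unfolding sums_def Fs_def by (intro tendsto_inner tendsto_const) blast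
      moreover have "c \<bullet> Fs n t = 0" for n unfolding Fs_def by (simp add: inner_sum_right cq)
      ultimately show ?thesis by (simp add: LIMSEQ_const_iff)
    qed
    then show ?thesis using f_indep by blast
  qed
  have invC: "invertible C"
    unfolding invertible_left_inverse matrix_left_invertible_ker using ker by blast
  define Ci where "Ci = matrix_inv C"
  have CiC: "Ci ** C = mat 1"
    unfolding Ci_def matrix_inv_def using someI_ex[OF invC[unfolded invertible_def]] by blast
  define h where "h i t = (Ci *v g t) $ i" for i t
  have hc: "h i t = (\<Sum>a\<in>UNIV. Ci $ i $ a * g t $ a)" for i t
    unfolding h_def matrix_vector_mult_def by simp
  have hL2: "L2 \<nu> (h i)" for i
    unfolding hc[abs_def] by (intro L2_sum L2_cmult gL2) simp
  have G_eq: "G i = dens_smeasure \<nu> (h i)" for i unfolding G_def h_def Ci_def ..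
  have Gfin: "fin_smeasure A B (G i)" for i unfolding G_eq by (rule dens_fin[OF sets_nu fin_nu hL2])
  have sintG: "sint (G i) w = integral\<^sup>L \<nu> (\<lambda>t. h i t * w t)" if "L2 \<nu> w" for i w
    unfolding G_eq by (rule dens_sint[OF hL2 that])
  have hint: "integral\<^sup>L \<nu> (\<lambda>t. h i t * w t) = (\<Sum>a\<in>UNIV. Ci $ i $ a * integral\<^sup>L \<nu> (\<lambda>t. g t $ a * w t))"
    if w: "L2 \<nu> w" for i w
  proof -
    have eq: "h i t * w t = (\<Sum>a\<in>UNIV. Ci $ i $ a * (g t $ a * w t))" for t
      unfolding hc sum_distrib_right by (simp add: mult_ac)
    have "integral\<^sup>L \<nu> (\<lambda>t. h i t * w t) = (\<Sum>a\<in>UNIV. integral\<^sup>L \<nu> (\<lambda>t. Ci $ i $ a * (g t $ a * w t)))"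
      unfolding eq by (rule Bochner_Integration.integral_sum) (use L2_prod[OF gL2 w] in auto)
    then show ?thesis by simp
  qed
  have hf: "integral\<^sup>L \<nu> (\<lambda>t. h i t * f t $ b) = (if i = b then 1 else 0)" for i b
  proof -
    have "integral\<^sup>L \<nu> (\<lambda>t. h i t * f t $ b) = (\<Sum>a\<in>UNIV. Ci $ i $ a * C $ a $ b)"
      unfolding hint[OF fL2] Cab ..
    also have "\<dots> = (Ci ** C) $ i $ b" unfolding matrix_matrix_mult_def by simp
    also have "\<dots> = (if i = b then 1 else 0)" unfolding CiC mat_def by simp
    finally show ?thesis .
  qed
  have unbG: "unbiased A B f G"
    unfolding unbiased_def
  proof (intro conjI allI Gfin)
    fix \<theta> :: "real^'m"
    have thf: "\<theta> \<bullet> f t = (\<Sum>b\<in>UNIV. \<theta> $ b * f t $ b)" for t unfolding inner_vec_def inner_real_def ..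
    have thL2: "L2 \<nu> (\<lambda>t. \<theta> \<bullet> f t)" unfolding thf by (intro L2_sum L2_cmult fL2) simp
    have "sint (G i) (\<lambda>t. \<theta> \<bullet> f t) = \<theta> $ i" for i
    proof -
      have "sint (G i) (\<lambda>t. \<theta> \<bullet> f t) = integral\<^sup>L \<nu> (\<lambda>t. \<Sum>b\<in>UNIV. \<theta> $ b * (h i t * f t $ b))"
        by (subst sintG[OF thL2]) (simp add: thf sum_distrib_left mult_ac)
      also have "\<dots> = (\<Sum>b\<in>UNIV. integral\<^sup>L \<nu> (\<lambda>t. \<theta> $ b * (h i t * f t $ b)))"
        by (rule Bochner_Integration.integral_sum) (use L2_prod[OF hL2 fL2] in auto)
      also have "\<dots> = (\<Sum>b\<in>UNIV. \<theta> $ b * (if i = b then 1 else 0))" by (simp add: hf)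
      also have "\<dots> = \<theta> $ i" by (simp add: if_distrib sum.delta cong: if_cong)
      finally show ?thesis .
    qed
    then show "(\<chi> i. sint (G i) (\<lambda>t. \<theta> \<bullet> f t)) = \<theta>" by (simp add: vec_eq_iff)
  qed
  have innerG: "sint (G i) (\<lambda>t. K t s) = Ci $ i \<bullet> f s" if s: "s \<in> {A..B}" for i s
  proof -
    have "sint (G i) (\<lambda>t. K t s) = (\<Sum>a\<in>UNIV. Ci $ i $ a * integral\<^sup>L \<nu> (\<lambda>t. g t $ a * K t s))"
      unfolding sintG[OF KL2(1)[OF s]] hint[OF KL2(1)[OF s]] ..
    also have "\<dots> = Ci $ i \<bullet> f s" unfolding tg[OF s] inner_vec_def inner_real_def ..
    finally show ?thesis .
  qed
  have key: "sint2 K (G i) (H j) = Ci $ i $ j" if H: "unbiased A B f H" for H :: "'m \<Rightarrow> smeasure" and i j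
  proof -
    have Hj: "fin_smeasure A B (H j)" using H unfolding unbiased_def by blast
    have "sint2 K (G i) (H j) = sint (H j) (\<lambda>s. Ci $ i \<bullet> f s)"
      unfolding sint2_def by (rule sint_cong[OF Hj]) (rule innerG)
    also have "\<dots> = (\<chi> j. sint (H j) (\<lambda>t. Ci $ i \<bullet> f t)) $ j" by simp
    also have "\<dots> = Ci $ i $ j" using H unfolding unbiased_def by metis
    finally show ?thesis .
  qed
  have covG: "covm K G = Ci" unfolding covm_def using key[OF unbG] by (simp add: vec_eq_iff)
  have Ksym: "\<And>s t. s \<in> {A..B} \<Longrightarrow> t \<in> {A..B} \<Longrightarrow> K s t = K t s"
    using K_cov unfolding cov_kernel_def by blast
  have opt: "loewner_le (covm K G) (covm K H')" if H': "unbiased A B f H'" for H'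
    unfolding loewner_le_def
  proof
    fix v :: "real^'m"
    have H'f: "fin_smeasure A B (H' i)" for i using H' unfolding unbiased_def by blast
    have Q: "(\<Sum>i\<in>UNIV. \<Sum>j\<in>UNIV. v $ i * v $ j * (sint2 K (H' i) (H' j) - sint2 K (H' i) (G j)
            - sint2 K (G i) (H' j) + sint2 K (G i) (G j))) \<ge> 0"
      by (rule quad_psd[OF AB K_cont K_cov _ H'f Gfin]) simp
    have sw: "sint2 K (H' i) (G j) = Ci $ j $ i" for i j
      using sint2_swap[OF AB K_cont Ksym H'f Gfin] key[OF H'] by metis
    have Q2: "(\<Sum>i\<in>UNIV. \<Sum>j\<in>UNIV. v $ i * v $ j * (sint2 K (H' i) (H' j) - Ci $ j $ i)) \<ge> 0"
      using Q unfolding sw key[OF H'] key[OF unbG] by simp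
    have swp: "(\<Sum>i\<in>UNIV. \<Sum>j\<in>UNIV. v $ i * v $ j * Ci $ j $ i) = (\<Sum>i\<in>UNIV. \<Sum>j\<in>UNIV. v $ i * v $ j * Ci $ i $ j)"
      by (subst sum.swap) (simp add: mult_ac)
    have "v \<bullet> ((covm K H' - covm K G) *v v) = (\<Sum>i\<in>UNIV. \<Sum>j\<in>UNIV. v $ i * v $ j * (sint2 K (H' i) (H' j) - Ci $ i $ j))"
      unfolding covG unfolding covm_def inner_vec_def matrix_vector_mult_def
      by (simp add: sum_distrib_left mult_ac)
    also have "\<dots> = (\<Sum>i\<in>UNIV. \<Sum>j\<in>UNIV. v $ i * v $ j * (sint2 K (H' i) (H' j) - Ci $ j $ i))"
      using swp by (simp add: right_diff_distrib sum_subtractf)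
    finally show "v \<bullet> ((covm K H' - covm K G) *v v) \<ge> 0" using Q2 by simp
  qed
  show ?thesis
    using summ unbG opt covG unfolding BLUE_def Ci_def by blast
qed



end
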